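(* Let $n\ge3$, $1\le k\le n$, $c_0>0$, and let $u\in C^2(\overline{\mathbb{R}^n_+})$ be positive with $\sigma_k(A^u)=2^k\binom nk$, $g_u\in\Gamma_k^+$ in $\overline{\mathbb{R}^n_+}$ and $\mathcal{B}_k^{g_u}=c_0$ on $\partial\mathbb{R}^n_+$. Then for every $x\in\partial\mathbb{R}^n_+$ there exists $\lambda_0(x)>0$ such that $$u_{x,\lambda}\le u\quad\text{on }\overline{\mathbb{R}^n_+}\setminus B_\lambda(x)\quad\text{for all }0<\lambda<\lambda_0(x).$$ In particular $\bar\lambda(x)>0$.
   Context: For $x\in\partial\mathbb{R}^n_+$ and $\lambda>0$, $u_{x,\lambda}(y):=\big(\frac{\lambda}{|y-x|}\big)^{n-2}u\big(x+\frac{\lambda^2(y-x)}{|y-x|^2}\big)$ (Kelvin transform w.r.t. $\partial B_\lambda(x)$), and $\bar\lambda(x):=\sup\{\mu>0: u_{x,\lambda}\le u \text{ in } \overline{\mathbb{R}^n_+}\setminus B_\lambda(x)\ \forall\,0<\lambda<\mu\}$. For positive $C^2$ $u$: $g_u=u^{4/(n-2)}|dx|^2$, $A^u=-\frac{2}{n-2}u^{-\frac{n+2}{n-2}}\nabla^2u+\frac{2n}{(n-2)^2}u^{-\frac{2n}{n-2}}\nabla u\otimes\nabla u-\frac{2}{(n-2)^2}u^{-\frac{2n}{n-2}}|\nabla u|^2I_n$; $\sigma_s$ is the $s$-th elementary symmetric function of eigenvalues; $\Gamma_k^+=\{\lambda:\sigma_1(\lambda)>0,\dots,\sigma_k(\lambda)>0\}$,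 $g_u\in\Gamma_k^+$ meaning eigenvalues of $A^u$ in $\Gamma_k^+$. On $\partial\mathbb{R}^n_+$: $h_{g_u}=-\frac{2}{n-2}u^{-\frac n{n-2}}\partial_{x_n}u$, $A^{\mathrm T}_{g_u}=((A^u)_{\alpha\beta})_{1\le\alpha,\beta\le n-1}$, $\mathcal{B}_k^{g_u}=\frac{(n-1)!}{(n-k)!(2k-1)!!}h_{g_u}^{2k-1}+\sum_{s=1}^{k-1}\frac{(n-1-s)!}{(n-k)!(2k-2s-1)!!}\sigma_s(A^{\mathrm T}_{g_u})h_{g_u}^{2k-2s-1}$. *)

theory Defs
  imports "HOL-Analysis.Analysis"
begin

fun dfact :: "nat \<Rightarrow> nat" where
  "dfact 0 = 1"
| "dfact (Suc 0) = 1"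
| "dfact (Suc (Suc m)) = Suc (Suc m) * dfact m"

definition half_space :: "'n \<Rightarrow> (real^'n) set" where
  "half_space N = {x. x $ N \<ge> 0}"

definition bdry_half_space :: "'n \<Rightarrow> (real^'n) set" where
  "bdry_half_space N = {x. x $ N = 0}"

definition C2_on :: "(real^'n) set \<Rightarrow> (real^'n \<Rightarrow> real) \<Rightarrow> (real^'n \<Rightarrow> real^'n)
      \<Rightarrow> (real^'n \<Rightarrow> real^'n^'n) \<Rightarrow> bool" where
  "C2_on H u Du D2u \<longleftrightarrow>
     (\<forall>x\<in>H. (u has_derivative (\<lambda>h. Du x \<bullet> h)) (at x within H)
          \<and> (Du has_derivative (\<lambda>h. D2u x *v h)) (at x within H))
     \<and> continuous_on H D2u"

definition A_u :: "(real^'n \<Rightarrow> real) \<Rightarrow> (real^'n \<Rightarrow> real^'n)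
      \<Rightarrow> (real^'n \<Rightarrow> real^'n^'n) \<Rightarrow> real^'n \<Rightarrow> real^'n^'n" where
  "A_u u Du D2u x =
     (let n = real CARD('n) in
      \<chi> i j. - (2 / (n - 2)) * u x powr (- (n + 2) / (n - 2)) * (D2u x $ i $ j)
             + (2 * n / (n - 2)\<^sup>2) * u x powr (- 2 * n / (n - 2)) * (Du x $ i) * (Du x $ j)
             - (2 / (n - 2)\<^sup>2) * u x powr (- 2 * n / (n - 2)) * (norm (Du x))\<^sup>2
                 * (if i = j then 1 else 0))"

(* lam (restricted to the index set I) is the family of eigenvalues of the
   symmetric matrix (A i j)_{i,j in I}: A = P diag(lam) P^T with P orthogonal on I *)
definition eig_on :: "'n set \<Rightarrow> ('n \<Rightarrow> 'n \<Rightarrow> real) \<Rightarrow> ('n \<Rightarrow> real) \<Rightarrow> bool" where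
  "eig_on I A lam \<longleftrightarrow>
     (\<exists>P :: 'n \<Rightarrow> 'n \<Rightarrow> real.
        (\<forall>i\<in>I. \<forall>j\<in>I. (\<Sum>l\<in>I. P l i * P l j) = (if i = j then 1 else 0))
      \<and> (\<forall>i\<in>I. \<forall>j\<in>I. A i j = (\<Sum>l\<in>I. P i l * lam l * P j l)))"

definition sigma_on :: "'n set \<Rightarrow> nat \<Rightarrow> ('n \<Rightarrow> real) \<Rightarrow> real" where
  "sigma_on I s lam = (\<Sum>S\<in>{S. S \<subseteq> I \<and> card S = s}. \<Prod>i\<in>S. lam i)"

definition Gamma_plus :: "'n set \<Rightarrow> nat \<Rightarrow> ('n \<Rightarrow> real) \<Rightarrow> bool" where
  "Gamma_plus I k lam \<longleftrightarrow> (\<forall>j\<in>{1..k}. sigma_on I j lam > 0)"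

definition h_u :: "'n \<Rightarrow> (real^'n \<Rightarrow> real) \<Rightarrow> (real^'n \<Rightarrow> real^'n) \<Rightarrow> real^'n \<Rightarrow> real" where
  "h_u N u Du x = (let n = real CARD('n) in
      - (2 / (n - 2)) * u x powr (- n / (n - 2)) * (Du x $ N))"

(* boundary operator B_k, given the eigenvalues lamT of the tangential block A^T *)
definition B_k :: "nat \<Rightarrow> 'n set \<Rightarrow> ('n \<Rightarrow> real) \<Rightarrow> real \<Rightarrow> real" where
  "B_k k T lamT h = (let n = CARD('n) in
      real (fact (n - 1)) / (real (fact (n - k)) * real (dfact (2 * k - 1))) * h ^ (2 * k - 1)
    + (\<Sum>s = 1..k - 1. real (fact (n - 1 - s)) / (real (fact (n - k)) * real (dfact (2 * k - 2 * s - 1)))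
                        * sigma_on T s lamT * h ^ (2 * k - 2 * s - 1)))"

definition kelvin :: "(real^'n \<Rightarrow> real) \<Rightarrow> real^'n \<Rightarrow> real \<Rightarrow> real^'n \<Rightarrow> real" where
  "kelvin u x lam y =
     (lam / norm (y - x)) ^ (CARD('n) - 2) * u (x + (lam\<^sup>2 / (norm (y - x))\<^sup>2) *\<^sub>R (y - x))"

definition lambda_bar :: "'n \<Rightarrow> (real^'n \<Rightarrow> real) \<Rightarrow> real^'n \<Rightarrow> ereal" where
  "lambda_bar N u x = Sup (ereal ` {mu. mu > 0 \<and>
      (\<forall>lam. 0 < lam \<and> lam < mu \<longrightarrow>
         (\<forall>y\<in>half_space N. dist y x \<ge> lam \<longrightarrow> kelvin u x lam y \<le> u y))})"

end

theory Submission
  imports Defs "HOL-Analysis.Analysis"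
begin

lemma sig_zero: "finite L \<Longrightarrow> sigma_on L 0 lam = 1"
proof -
  assume f: "finite L"
  have e: "{S. S \<subseteq> L \<and> card S = 0} = {{}}"
  proof -
    have "S = {}" if "S \<subseteq> L" "card S = 0" for S
      using that f by (meson card_0_eq infinite_super)
    then show ?thesis by auto
  qed
  show ?thesis unfolding sigma_on_def e by simp
qed

lemma sig_big: "finite L \<Longrightarrow> card L < s \<Longrightarrow> sigma_on L s lam = 0"
proof -
  assume f: "finite L" "card L < s"
  have e: "{S. S \<subseteq> L \<and> card S = s} = {}"
  proof -
    have "card S \<noteq> s" if "S \<subseteq> L" for S using card_mono[OF f(1) that] f(2) by linarith
    then show ?thesis by blast
  qed
  show ?thesis unfolding sigma_on_def e by simp
qed

lemma sig_empty: "sigma_on {} (Suc s) lam = 0"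
  by (rule sig_big) auto

lemma sig_insert:
  assumes f: "finite L" and a: "a \<notin> L"
  shows "sigma_on (insert a L) (Suc s) lam = sigma_on L (Suc s) lam + lam a * sigma_on L s lam"
proof -
  let ?A = "{S. S \<subseteq> L \<and> card S = Suc s}"
  let ?C = "{S. S \<subseteq> L \<and> card S = s}"
  have eq: "{S. S \<subseteq> insert a L \<and> card S = Suc s} = ?A \<union> insert a ` ?C"
  proof (rule set_eqI, rule iffI)
    fix S assume "S \<in> {S. S \<subseteq> insert a L \<and> card S = Suc s}"
    hence S: "S \<subseteq> insert a L" "card S = Suc s" by auto
    have fS: "finite S" using S(1) f by (meson finite_insert finite_subset)
    show "S \<in> ?A \<union> insert a ` ?C"
    proof (cases "a \<in> S")
      case True
      have "S - {a} \<subseteq> L" using S(1) by blast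
      moreover have "card (S - {a}) = s" using S(2) True fS by (simp add: card_Diff_singleton)
      ultimately have "S - {a} \<in> ?C" by blast
      moreover have "S = insert a (S - {a})" using True by blast
      ultimately show ?thesis by blast
    next
      case False
      then have "S \<subseteq> L" using S(1) by blast
      then show ?thesis using S(2) by blast
    qed
  next
    fix S assume "S \<in> ?A \<union> insert a ` ?C"
    then consider "S \<in> ?A" | T where "T \<in> ?C" "S = insert a T" by blast
    then show "S \<in> {S. S \<subseteq> insert a L \<and> card S = Suc s}"
    proof cases
      case 1 then show ?thesis by blast
    next
      case 2
      have "T \<subseteq> L" using 2(1) by blast
      then have fT: "finite T" using f by (rule finite_subset)
      have "a \<notin> T" using 2(1) a by blast
      then have "card S = Suc s" using 2 fT by simp
      moreover have "S \<subseteq> insert a L" using 2 by blast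
      ultimately show ?thesis by blast
    qed
  qed
  have disj: "?A \<inter> insert a ` ?C = {}" using a by blast
  have finA: "finite ?A" by (rule finite_subset[of _ "Pow L"]) (use f in auto)
  have finC: "finite ?C" by (rule finite_subset[of _ "Pow L"]) (use f in auto)
  have inj: "inj_on (insert a) ?C" unfolding inj_on_def using a
    by (metis (mono_tags, lifting) insert_ident mem_Collect_eq subset_iff)
  have "sigma_on (insert a L) (Suc s) lam = sum (prod lam) ?A + sum (prod lam) (insert a ` ?C)"
    unfolding sigma_on_def eq by (rule sum.union_disjoint) (use finA finC disj in auto)
  also have "sum (prod lam) (insert a ` ?C) = sum (\<lambda>S. lam a * prod lam S) ?C"
  proof (subst sum.reindex[OF inj], rule sum.cong)
    fix S assume "S \<in> ?C"
    hence "finite S" "a \<notin> S" using f a by (auto intro: finite_subset)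
    thus "(prod lam \<circ> insert a) S = lam a * prod lam S" by simp
  qed simp
  also have "\<dots> = lam a * sigma_on L s lam" unfolding sigma_on_def by (rule sum_distrib_left[symmetric])
  finally show ?thesis unfolding sigma_on_def by (simp only:)
qed

lemma sig_expand:
  assumes "finite L" "card L \<le> M"
  shows "(\<Prod>l\<in>L. 1 + x * lam l) = (\<Sum>s\<le>M. sigma_on L s lam * x ^ s)"
  using assms
proof (induction L arbitrary: M rule: finite_induct)
  case empty
  have "(\<Sum>s\<le>M. sigma_on {} s lam * x ^ s) = (\<Sum>s\<le>M. (if s = 0 then 1 else 0))"
  proof (rule sum.cong)
    fix s show "sigma_on {} s lam * x ^ s = (if s = 0 then 1 else 0)"
      by (cases s) (simp_all only: sig_zero sig_empty finite.emptyI power_0 mult_1_right mult_zero_left, simp_all)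
  qed simp
  then show ?case by simp
next
  case (insert a L)
  then obtain M' where M: "M = Suc M'" "card L \<le> M'" by (cases M) auto
  have IH: "(\<Prod>l\<in>L. 1 + x * lam l) = (\<Sum>s\<le>M'. sigma_on L s lam * x ^ s)"
    using insert.IH M(2) .
  have "(\<Prod>l\<in>insert a L. 1 + x * lam l) = (1 + x * lam a) * (\<Sum>s\<le>M'. sigma_on L s lam * x ^ s)"
    using insert.hyps IH by simp
  also have "\<dots> = (\<Sum>s\<le>M'. sigma_on L s lam * x ^ s) + (\<Sum>s\<le>M'. lam a * sigma_on L s lam * x ^ Suc s)"
    by (simp add: algebra_simps sum_distrib_left sum.distrib)
  also have "(\<Sum>s\<le>M'. sigma_on L s lam * x ^ s) = (\<Sum>s\<le>M. sigma_on L s lam * x ^ s)"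
  proof -
    have "sigma_on L (Suc M') lam = 0" using M(2) insert.hyps(1) by (intro sig_big) auto
    then show ?thesis unfolding M(1) sum.atMost_Suc by simp
  qed
  also have "(\<Sum>s\<le>M'. lam a * sigma_on L s lam * x ^ Suc s)
      = (\<Sum>s\<le>M. (if s = 0 then 0 else lam a * sigma_on L (s - 1) lam) * x ^ s)"
    unfolding M(1) sum.atMost_Suc_shift by simp
  also have "(\<Sum>s\<le>M. sigma_on L s lam * x ^ s) + \<dots> = (\<Sum>s\<le>M. sigma_on (insert a L) s lam * x ^ s)"
    unfolding sum.distrib[symmetric]
  proof (rule sum.cong)
    fix s assume "s \<in> {..M}"
    show "sigma_on L s lam * x ^ s + (if s = 0 then 0 else lam a * sigma_on L (s - 1) lam) * x ^ s
        = sigma_on (insert a L) s lam * x ^ s"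
    proof (cases s)
      case 0
      have "sigma_on L 0 lam = 1" "sigma_on (insert a L) 0 lam = 1"
        using insert.hyps(1) by (auto intro: sig_zero)
      then show ?thesis using 0 by simp
    next
      case (Suc t)
      have "sigma_on (insert a L) (Suc t) lam = sigma_on L (Suc t) lam + lam a * sigma_on L t lam"
        using insert.hyps by (intro sig_insert)
      then show ?thesis using Suc by (simp add: distrib_right)
    qed
  qed simp
  finally show ?case .
qed

definition pf :: "(nat \<Rightarrow> real) \<Rightarrow> nat \<Rightarrow> real \<Rightarrow> real" where
  "pf c m x = (\<Sum>i\<le>m. c i * x ^ i)"

definition dc :: "(nat \<Rightarrow> real) \<Rightarrow> nat \<Rightarrow> real" where
  "dc c i = real (Suc i) * c (Suc i)"

definition nroots :: "(real \<Rightarrow> real) \<Rightarrow> nat \<Rightarrow> bool" where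
  "nroots f d \<longleftrightarrow> (\<exists>S. finite S \<and> card S = d \<and> (\<forall>s\<in>S. f s = 0))"

lemma pf_deriv: "(pf c (Suc m) has_real_derivative pf (dc c) m x) (at x)"
proof -
  have "((\<lambda>x. \<Sum>i\<le>Suc m. c i * x ^ i) has_real_derivative (\<Sum>i\<le>Suc m. c i * (real i * x ^ (i - Suc 0)))) (at x)"
    by (intro DERIV_sum DERIV_cmult DERIV_pow)
  moreover have "(\<Sum>i\<le>Suc m. c i * (real i * x ^ (i - Suc 0))) = pf (dc c) m x"
    unfolding sum.atMost_Suc_shift pf_def dc_def by (simp add: algebra_simps)
  ultimately show ?thesis unfolding pf_def[abs_def] by simp
qed

lemma rolle_count:
  fixes f f' :: "real \<Rightarrow> real"
  assumes der: "\<And>x. (f has_real_derivative f' x) (at x)"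
  shows "finite S \<Longrightarrow> card S = Suc d \<Longrightarrow> (\<forall>s\<in>S. f s = 0) \<Longrightarrow>
     \<exists>T. finite T \<and> card T = d \<and> (\<forall>t\<in>T. f' t = 0) \<and> (\<forall>t\<in>T. t < Max S)"
proof (induction d arbitrary: S)
  case 0
  then show ?case by (intro exI[of _ "{}"]) auto
next
  case (Suc d)
  define a where "a = Max S"
  define S' where "S' = S - {a}"
  have ne: "S \<noteq> {}" using Suc.prems by auto
  have aS: "a \<in> S" unfolding a_def using Suc.prems(1) ne by simp
  have cS': "card S' = Suc d" unfolding S'_def using Suc.prems aS by simp
  have fS': "finite S'" unfolding S'_def using Suc.prems by simp
  have neS': "S' \<noteq> {}" using cS' by auto
  obtain T' where T': "finite T'" "card T' = d" "\<forall>t\<in>T'. f' t = 0" "\<forall>t\<in>T'. t < Max S'"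
    using Suc.IH[OF fS' cS'] Suc.prems(3) unfolding S'_def by auto
  define b where "b = Max S'"
  have bS': "b \<in> S'" unfolding b_def using fS' neS' by simp
  have "b \<le> a" using bS' Suc.prems(1) unfolding S'_def a_def by simp
  moreover have "b \<noteq> a" using bS' unfolding S'_def by simp
  ultimately have ba: "b < a" by simp
  have fa: "f a = 0" "f b = 0" using Suc.prems(3) aS bS' unfolding S'_def by auto
  have cont: "continuous_on {b..a} f"
    using der by (meson DERIV_continuous continuous_at_imp_continuous_on)
  have dif: "f differentiable (at x)" for x using der real_differentiable_def by blast
  obtain z where z: "b < z" "z < a" "(f has_real_derivative 0) (at z)"
    using Rolle[OF ba _ cont] fa dif by auto
  have fz: "f' z = 0" using DERIV_unique[OF der z(3)] .
  have zT: "z \<notin> T'" using T'(4) z(1) unfolding b_def by force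
  show ?case
  proof (intro exI[of _ "insert z T'"] conjI)
    show "finite (insert z T')" using T' by simp
    show "card (insert z T') = Suc d" using T' zT by simp
    show "\<forall>t\<in>insert z T'. f' t = 0" using T' fz by simp
    show "\<forall>t\<in>insert z T'. t < Max S" using T'(4) z ba unfolding a_def b_def by auto
  qed
qed

lemma nroots_deriv:
  assumes "nroots f (Suc d)" "\<And>x. (f has_real_derivative f' x) (at x)"
  shows "nroots f' d"
  using assms rolle_count[of f f'] unfolding nroots_def by metis

lemma dc_iter: "(dc ^^ r) c i = c (i + r) * fact (i + r) / fact i"
proof (induction r arbitrary: i)
  case 0 then show ?case by simp
next
  case (Suc r)
  have "(dc ^^ Suc r) c i = real (Suc i) * ((dc ^^ r) c (Suc i))" by (simp add: dc_def)
  also have "\<dots> = real (Suc i) * (c (Suc i + r) * fact (Suc i + r) / fact (Suc i))" using Suc by simp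
  also have "\<dots> = c (i + Suc r) * fact (i + Suc r) / fact i"
    by (simp add: fact_Suc field_simps del: of_nat_Suc)
  finally show ?case .
qed

lemma nroots_iter:
  "nroots (pf c m) (d + r) \<Longrightarrow> r \<le> m \<Longrightarrow> nroots (pf ((dc ^^ r) c) (m - r)) d"
proof (induction r arbitrary: d)
  case 0 then show ?case by simp
next
  case (Suc r)
  have "nroots (pf ((dc ^^ r) c) (m - r)) (Suc d)"
    using Suc.IH[of "Suc d"] Suc.prems by simp
  moreover have "m - r = Suc (m - Suc r)" using Suc.prems by simp
  ultimately have "nroots (pf ((dc ^^ r) c) (Suc (m - Suc r))) (Suc d)" by simp
  then have "nroots (pf (dc ((dc ^^ r) c)) (m - Suc r)) d"
    by (rule nroots_deriv) (rule pf_deriv)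
  then show ?case by simp
qed

lemma sum_rev_atMost: "(\<Sum>i\<le>m. f (m - i)) = (\<Sum>i\<le>(m::nat). f i)"
  by (rule sum.reindex_bij_witness[of _ "\<lambda>i. m - i" "\<lambda>i. m - i"]) auto

lemma nroots_rev:
  assumes "nroots (pf c m) d" "c 0 \<noteq> 0"
  shows "nroots (pf (\<lambda>i. c (m - i)) m) d"
proof -
  obtain S where S: "finite S" "card S = d" "\<forall>s\<in>S. pf c m s = 0"
    using assms(1) unfolding nroots_def by auto
  have "pf c m 0 = c 0" unfolding pf_def sum.atMost_shift by simp
  then have z: "0 \<notin> S" using S(3) assms(2) by auto
  have inj: "inj_on (\<lambda>s. 1 / s) S" unfolding inj_on_def by auto
  show ?thesis unfolding nroots_def
  proof (intro exI[of _ "(\<lambda>s. 1 / s) ` S"] conjI)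
    show "finite ((\<lambda>s. 1 / s) ` S)" using S by simp
    show "card ((\<lambda>s. 1 / s) ` S) = d" using S card_image[OF inj] by simp
    show "\<forall>s\<in>(\<lambda>s. 1 / s) ` S. pf (\<lambda>i. c (m - i)) m s = 0"
    proof
      fix t assume "t \<in> (\<lambda>s. 1 / s) ` S"
      then obtain s where s: "s \<in> S" "t = 1 / s" by auto
      have s0: "s \<noteq> 0" using s z by auto
      have "s ^ m * pf (\<lambda>i. c (m - i)) m (1 / s) = (\<Sum>i\<le>m. c (m - i) * s ^ (m - i))"
        unfolding pf_def sum_distrib_left
      proof (rule sum.cong)
        fix i assume "i \<in> {..m}"
        then have "s ^ m = s ^ (m - i) * s ^ i" by (simp add: power_add[symmetric])
        then show "s ^ m * (c (m - i) * (1 / s) ^ i) = c (m - i) * s ^ (m - i)"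
          using s0 by (simp add: power_one_over field_simps)
      qed simp
      also have "\<dots> = pf c m s" unfolding pf_def by (rule sum_rev_atMost[of "\<lambda>i. c i * s ^ i"])
      also have "\<dots> = 0" using S(3) s by simp
      finally show "pf (\<lambda>i. c (m - i)) m t = 0" using s0 s by simp
    qed
  qed
qed

lemma quad_disc:
  fixes a0 a1 a2 :: real
  assumes "nroots (pf c 2) 2" "c 2 \<noteq> 0"
  shows "(c 1)\<^sup>2 > 4 * c 0 * c 2"
proof -
  obtain S where S: "finite S" "card S = 2" "\<forall>s\<in>S. pf c 2 s = 0"
    using assms(1) unfolding nroots_def by auto
  then obtain r1 r2 where r: "S = {r1, r2}" "r1 \<noteq> r2" by (auto simp: card_2_iff)
  have e: "c 0 + c 1 * r + c 2 * r\<^sup>2 = 0" if "r \<in> S" for r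
    using S(3) that unfolding pf_def by (simp add: numeral_2_eq_2 power2_eq_square)
  have e1: "c 0 + c 1 * r1 + c 2 * r1\<^sup>2 = 0" and e2: "c 0 + c 1 * r2 + c 2 * r2\<^sup>2 = 0"
    using e r by auto
  have "(r1 - r2) * (c 1 + c 2 * (r1 + r2)) = 0" using e1 e2 by (simp add: algebra_simps power2_eq_square)
  then have h1: "c 1 = - c 2 * (r1 + r2)" using r(2) by simp
  have "c 0 = - (c 1 * r1) - c 2 * r1\<^sup>2" using e1 by linarith
  also have "\<dots> = c 2 * r1 * r2" unfolding h1 by (simp add: algebra_simps power2_eq_square)
  finally have h0: "c 0 = c 2 * r1 * r2" .
  have "(c 1)\<^sup>2 - 4 * c 0 * c 2 = (c 2)\<^sup>2 * (r1 - r2)\<^sup>2"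
    unfolding h1 h0 by (simp add: algebra_simps power2_eq_square)
  moreover have "(c 2)\<^sup>2 * (r1 - r2)\<^sup>2 > 0" using assms(2) r(2) by simp
  ultimately show ?thesis by linarith
qed

lemma newton_distinct:
  assumes fin: "finite L" and inj: "inj_on lam L" and nz: "\<forall>l\<in>L. lam l \<noteq> 0" and j: "1 \<le> j"
  shows "(sigma_on L j lam)\<^sup>2 \<ge> sigma_on L (j - 1) lam * sigma_on L (j + 1) lam"
proof (cases "sigma_on L (j - 1) lam * sigma_on L (j + 1) lam \<le> 0")
  case True
  then show ?thesis by (smt (verit) zero_le_power2)
next
  case False
  define \<sigma> where "\<sigma> = (\<lambda>s. sigma_on L s lam)"
  define m where "m = card L"
  obtain j0 where j0: "j = Suc j0" using j by (cases j) auto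
  have P: "\<sigma> j0 * \<sigma> (j0 + 2) > 0" using False unfolding \<sigma>_def j0 by simp
  have s2: "\<sigma> (j0 + 2) \<noteq> 0" and s0: "\<sigma> j0 \<noteq> 0" using P by auto
  have "j0 + 2 \<le> m"
  proof (rule ccontr)
    assume "\<not> j0 + 2 \<le> m"
    then have "\<sigma> (j0 + 2) = 0" unfolding \<sigma>_def m_def using fin by (intro sig_big) auto
    then show False using s2 by simp
  qed
  then obtain e where e: "m = j0 + 2 + e" by (metis le_add_diff_inverse)
  have expand: "pf \<sigma> m x = (\<Prod>l\<in>L. 1 + x * lam l)" for x
    unfolding pf_def \<sigma>_def m_def using sig_expand[OF fin, of "card L" x lam] by simp
  have r0: "nroots (pf \<sigma> m) m"
    unfolding nroots_def
  proof (intro exI[of _ "(\<lambda>l. - 1 / lam l) ` L"] conjI)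
    show "finite ((\<lambda>l. - 1 / lam l) ` L)" using fin by simp
    have "inj_on (\<lambda>l. - 1 / lam l) L" using inj nz unfolding inj_on_def by auto
    then show "card ((\<lambda>l. - 1 / lam l) ` L) = m" unfolding m_def by (simp add: card_image)
    show "\<forall>s\<in>(\<lambda>l. - 1 / lam l) ` L. pf \<sigma> m s = 0"
    proof
      fix s assume "s \<in> (\<lambda>l. - 1 / lam l) ` L"
      then obtain a where a: "a \<in> L" "s = - 1 / lam a" by auto
      have "1 + s * lam a = 0" using a nz by simp
      then show "pf \<sigma> m s = 0" unfolding expand using a fin by (intro prod_zero) auto
    qed
  qed
  define c1 where "c1 = (dc ^^ j0) \<sigma>"
  have r1: "nroots (pf c1 (e + 2)) (e + 2)"
    using nroots_iter[of \<sigma> m "e + 2" j0] r0 e unfolding c1_def by (simp add: add.commute add.left_commute)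
  have c1i: "c1 i = \<sigma> (i + j0) * fact (i + j0) / fact i" for i
    unfolding c1_def by (rule dc_iter)
  have "c1 0 \<noteq> 0" using c1i[of 0] s0 by simp
  then have r2: "nroots (pf (\<lambda>i. c1 (e + 2 - i)) (e + 2)) (e + 2)" by (rule nroots_rev[OF r1])
  define c3 where "c3 = (dc ^^ e) (\<lambda>i. c1 (e + 2 - i))"
  have r3: "nroots (pf c3 2) 2"
    using nroots_iter[of "\<lambda>i. c1 (e + 2 - i)" "e + 2" 2 e] r2 unfolding c3_def by (simp add: add.commute)
  have c3i: "c3 i = c1 (e + 2 - (i + e)) * fact (i + e) / fact i" for i
    unfolding c3_def by (rule dc_iter)
  have c30: "c3 0 = \<sigma> (j0 + 2) * fact (j0 + 2) / 2 * fact e"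
    using c3i[of 0] c1i[of 2] by (simp add: numeral_2_eq_2 add.commute)
  have c31: "c3 1 = \<sigma> (Suc j0) * fact (Suc j0) * fact (Suc e)"
    using c3i[of 1] c1i[of 1] by (simp add: add.commute)
  have c32: "c3 2 = \<sigma> j0 * fact j0 * fact (e + 2) / 2"
    using c3i[of 2] c1i[of 0] by (simp add: numeral_2_eq_2 add.commute)
  have "c3 2 \<noteq> 0" unfolding c32 using s0 by simp
  from quad_disc[OF r3 this] have q: "(c3 1)\<^sup>2 > 4 * c3 0 * c3 2" .
  define A where "A = (fact j0 * fact e :: real)"
  have A: "A > 0" unfolding A_def by simp
  define K where "K = (real j0 + 1) * (real e + 1) * A\<^sup>2"
  have K: "K > 0" unfolding K_def using A by simp
  have L1: "(c3 1)\<^sup>2 = (\<sigma> (Suc j0))\<^sup>2 * ((real j0 + 1) * (real e + 1)) * K"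
    unfolding c31 K_def A_def by (simp add: fact_Suc algebra_simps power2_eq_square)
  have R1: "4 * c3 0 * c3 2 = (\<sigma> j0 * \<sigma> (j0 + 2)) * ((real j0 + 2) * (real e + 2)) * K"
  proof -
    have f1: "(fact (j0 + 2)::real) = (real j0 + 2) * (real j0 + 1) * fact j0"
      by (simp add: numeral_2_eq_2 fact_Suc algebra_simps)
    have f2: "(fact (e + 2)::real) = (real e + 2) * (real e + 1) * fact e"
      by (simp add: numeral_2_eq_2 fact_Suc algebra_simps)
    show ?thesis unfolding c30 c32 K_def A_def f1 f2 by (simp add: power2_eq_square)
  qed
  have "(\<sigma> (Suc j0))\<^sup>2 * ((real j0 + 1) * (real e + 1)) > (\<sigma> j0 * \<sigma> (j0 + 2)) * ((real j0 + 2) * (real e + 2))"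
    using q K unfolding L1 R1 by simp
  moreover have "(\<sigma> j0 * \<sigma> (j0 + 2)) * ((real j0 + 2) * (real e + 2)) \<ge> (\<sigma> j0 * \<sigma> (j0 + 2)) * ((real j0 + 1) * (real e + 1))"
    using P by (intro mult_left_mono) (auto intro: mult_mono)
  ultimately have "(\<sigma> (Suc j0))\<^sup>2 * ((real j0 + 1) * (real e + 1)) > (\<sigma> j0 * \<sigma> (j0 + 2)) * ((real j0 + 1) * (real e + 1))"
    by linarith
  then have "(\<sigma> (Suc j0))\<^sup>2 > \<sigma> j0 * \<sigma> (j0 + 2)"
    by (smt (verit) mult_right_mono of_nat_0_le_iff zero_less_mult_iff)
  then show ?thesis unfolding \<sigma>_def j0 by simp
qed

lemma newton:
  assumes fin: "finite L" and j: "1 \<le> j"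
  shows "(sigma_on L j lam)\<^sup>2 \<ge> sigma_on L (j - 1) lam * sigma_on L (j + 1) lam"
proof -
  obtain g :: "'a \<Rightarrow> nat" and N where g: "inj_on g L"
    using finite_imp_inj_to_nat_seg[OF fin] by blast
  define lE where "lE = (\<lambda>(\<epsilon>::real) l. lam l + \<epsilon> * real (Suc (g l)))"
  define F where "F = (\<lambda>\<epsilon>. (sigma_on L j (lE \<epsilon>))\<^sup>2 - sigma_on L (j - 1) (lE \<epsilon>) * sigma_on L (j + 1) (lE \<epsilon>))"
  define B where "B = (\<lambda>(a, b). (lam b - lam a) / (real (Suc (g a)) - real (Suc (g b)))) ` (L \<times> L)
      \<union> (\<lambda>a. - lam a / real (Suc (g a))) ` L"
  have finB: "finite B" unfolding B_def using fin by simp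
  have good: "inj_on (lE \<epsilon>) L \<and> (\<forall>l\<in>L. lE \<epsilon> l \<noteq> 0)" if "\<epsilon> \<notin> B" for \<epsilon>
  proof
    show "inj_on (lE \<epsilon>) L"
    proof (rule inj_onI)
      fix a b assume ab: "a \<in> L" "b \<in> L" "lE \<epsilon> a = lE \<epsilon> b"
      show "a = b"
      proof (rule ccontr)
        assume "a \<noteq> b"
        then have gd: "real (Suc (g a)) - real (Suc (g b)) \<noteq> 0" using g ab unfolding inj_on_def by auto
        have "\<epsilon> * (real (Suc (g a)) - real (Suc (g b))) = lam b - lam a"
          using ab(3) unfolding lE_def by (simp add: algebra_simps)
        then have "\<epsilon> = (lam b - lam a) / (real (Suc (g a)) - real (Suc (g b)))"
          using gd by (simp add: field_simps)
        then have "\<epsilon> \<in> B" unfolding B_def using ab by auto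
        then show False using that by simp
      qed
    qed
    show "\<forall>l\<in>L. lE \<epsilon> l \<noteq> 0"
    proof
      fix l assume l: "l \<in> L"
      show "lE \<epsilon> l \<noteq> 0"
      proof
        assume "lE \<epsilon> l = 0"
        then have "\<epsilon> = - lam l / real (Suc (g l))" unfolding lE_def
          by (simp add: field_simps del: of_nat_Suc)
        then have "\<epsilon> \<in> B" unfolding B_def using l by auto
        then show False using that by simp
      qed
    qed
  qed
  define \<delta> where "\<delta> = Min (insert 1 {b\<in>B. b > 0})"
  have \<delta>: "\<delta> > 0" unfolding \<delta>_def using finB by (subst Min_gr_iff) auto
  have nB: "\<epsilon> \<notin> B" if "0 < \<epsilon>" "\<epsilon> < \<delta>" for \<epsilon>
  proof
    assume "\<epsilon> \<in> B"
    then have "\<delta> \<le> \<epsilon>" unfolding \<delta>_def using finB that by (intro Min_le) auto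
    then show False using that by simp
  qed
  have Fpos: "F \<epsilon> \<ge> 0" if "0 < \<epsilon>" "\<epsilon> < \<delta>" for \<epsilon>
    using newton_distinct[OF fin _ _ j, of "lE \<epsilon>"] good[OF nB[OF that]] unfolding F_def by simp
  have cont: "isCont (\<lambda>\<epsilon>. sigma_on L s (lE \<epsilon>)) 0" for s
    unfolding sigma_on_def lE_def by (intro continuous_intros)
  have "isCont F 0" unfolding F_def by (intro continuous_intros cont)
  then have "(F \<longlongrightarrow> F 0) (at 0)" by (simp add: isCont_def)
  then have lim: "(F \<longlongrightarrow> F 0) (at_right 0)" by (rule tendsto_mono[OF at_le, rotated]) simp
  have ev: "\<forall>\<^sub>F \<epsilon> in at_right 0. 0 \<le> F \<epsilon>"
    using \<delta> Fpos by (subst eventually_at_right[of 0 1]) auto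
  have "0 \<le> F 0" by (rule tendsto_lowerbound[OF lim ev]) simp
  moreover have "lE 0 = lam" unfolding lE_def by auto
  ultimately show ?thesis unfolding F_def by simp
qed

lemma gamma_delete:
  assumes fin: "finite L" and i: "i \<in> L" and pos: "\<forall>j\<in>{1..k}. sigma_on L j lam > 0"
  shows "m \<le> k - 1 \<Longrightarrow> sigma_on (L - {i}) m lam > 0"
proof (induction m)
  case 0
  then show ?case using fin by (simp add: sig_zero)
next
  case (Suc m)
  define L' where "L' = L - {i}"
  have fL': "finite L'" and iL': "i \<notin> L'" and LL: "L = insert i L'" using fin i unfolding L'_def by auto
  define a where "a = sigma_on L' m lam"
  define b where "b = sigma_on L' (Suc m) lam"
  define c where "c = sigma_on L' (Suc (Suc m)) lam"
  define l where "l = lam i"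
  have a: "a > 0" using Suc unfolding a_def L'_def by simp
  have "Suc m \<in> {1..k}" "Suc (Suc m) \<in> {1..k}" using Suc.prems by auto
  then have p1: "sigma_on L (Suc m) lam > 0" and p2: "sigma_on L (Suc (Suc m)) lam > 0" using pos by auto
  have h1: "b + l * a > 0"
    using p1 sig_insert[OF fL' iL', of m lam] unfolding LL a_def b_def l_def by simp
  have h2: "c + l * b > 0"
    using p2 sig_insert[OF fL' iL', of "Suc m" lam] unfolding LL b_def c_def l_def by simp
  have N: "b\<^sup>2 \<ge> a * c" using newton[OF fL', of "Suc m" lam] unfolding a_def b_def c_def by simp
  show ?case
  proof (rule ccontr)
    assume "\<not> ?case"
    then have b: "b \<le> 0" unfolding b_def L'_def by simp
    have "a * c + l * a * b > 0" using mult_pos_pos[OF a h2] by (simp add: algebra_simps)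
    moreover have "(b + l * a) * (- b) \<ge> 0" using h1 b by (intro mult_nonneg_nonneg) auto
    ultimately have "a * c > b\<^sup>2" by (simp add: algebra_simps power2_eq_square)
    then show False using N by simp
  qed
qed

lemma sig_one: "finite L \<Longrightarrow> sigma_on L 1 lam = (\<Sum>l\<in>L. lam l)"
proof (induction L rule: finite_induct)
  case empty then show ?case using sig_empty[of 0] by simp
next
  case (insert a L)
  then show ?case using sig_insert[OF insert(1,2), of 0 lam] by (simp add: sig_zero)
qed

lemma orth_rows:
  fixes P :: "'n::finite \<Rightarrow> 'n \<Rightarrow> real"
  assumes "\<forall>i j. (\<Sum>l\<in>UNIV. P l i * P l j) = (if i = j then 1 else 0)"
  shows "(\<Sum>l\<in>UNIV. P i l * P j l) = (if i = j then 1 else 0)"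
proof -
  define Pm where "Pm = (\<chi> i j. P i j :: real^'n^'n)"
  have "transpose Pm ** Pm = mat 1"
    using assms unfolding Pm_def by (simp add: vec_eq_iff matrix_matrix_mult_def transpose_def mat_def)
  then have "Pm ** transpose Pm = mat 1" using matrix_left_right_inverse by blast
  then have "(Pm ** transpose Pm) $ i $ j = mat 1 $ i $ j" by simp
  then show ?thesis unfolding Pm_def by (simp add: matrix_matrix_mult_def transpose_def mat_def)
qed

lemma det_conj:
  fixes P :: "'n::finite \<Rightarrow> 'n \<Rightarrow> real"
  assumes Po: "\<forall>i j. (\<Sum>l\<in>UNIV. P l i * P l j) = (if i = j then 1 else 0)"
  shows "det (\<chi> i j. (\<Sum>l\<in>UNIV. P i l * d l * P j l) :: real^'n^'n) = (\<Prod>l\<in>UNIV. d l)"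
proof -
  define Pm where "Pm = (\<chi> i j. P i j :: real^'n^'n)"
  define Dm where "Dm = (\<chi> i j. if i = j then d i else 0 :: real^'n^'n)"
  have e: "(\<chi> i j. (\<Sum>l\<in>UNIV. P i l * d l * P j l) :: real^'n^'n) = Pm ** Dm ** transpose Pm"
    unfolding Pm_def Dm_def
    by (simp add: vec_eq_iff matrix_matrix_mult_def transpose_def if_distrib if_distribR sum.If_cases)
  have "transpose Pm ** Pm = mat 1"
    using Po unfolding Pm_def by (simp add: vec_eq_iff matrix_matrix_mult_def transpose_def mat_def)
  then have "det (transpose Pm) * det Pm = 1" by (metis det_I det_mul)
  moreover have "det Dm = (\<Prod>l\<in>UNIV. d l)" unfolding Dm_def by (subst det_diagonal) auto
  ultimately show ?thesis unfolding e det_mul by (simp add: algebra_simps)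
qed

lemma row_chi: "row k (\<chi> i. f i) = f k"
  by (simp add: row_def vec_eq_iff)

lemma det_rowops:
  fixes R :: "real^'n::finite^'n" and c :: "'n \<Rightarrow> real"
  assumes cN: "c N = 0"
  shows "det (\<chi> i. row i R + c i *s row N R) = det R"
proof -
  define RS where "RS = (\<lambda>S. (\<chi> i. if i \<in> S then row i R + c i *s row N R else row i R) :: real^'n^'n)"
  have gen: "S \<subseteq> UNIV - {N} \<Longrightarrow> det (RS S) = det R" if "finite S" for S
    using that
  proof (induction S rule: finite_induct)
    case empty
    then show ?case unfolding RS_def by (simp add: row_def vec_eq_iff)
  next
    case (insert a S)
    have aN: "a \<noteq> N" using insert by auto
    have rN: "row N (RS S) = row N R" using insert unfolding RS_def by (auto simp: row_chi)
    have ra: "row a (RS S) = row a R" using insert unfolding RS_def by (auto simp: row_chi)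
    have e: "RS (insert a S) = (\<chi> k. if k = a then row a (RS S) + c a *s row N (RS S) else row k (RS S))"
      unfolding rN ra unfolding RS_def by (simp add: row_chi vec_eq_iff)
    have "c a *s row N (RS S) \<in> vec.span {row j (RS S) |j. j \<noteq> a}"
      using aN by (intro vec.span_scale vec.span_base) auto
    then have "det (RS (insert a S)) = det (RS S)" unfolding e by (rule det_row_span)
    then show ?case using insert by simp
  qed
  have "(\<chi> i. row i R + c i *s row N R) = RS (UNIV - {N})"
    unfolding RS_def using cN by (simp add: vec_eq_iff)
  then show ?thesis using gen[of "UNIV - {N}"] by simp
qed

lemma sum_UNIV_split:
  fixes f :: "'n::finite \<Rightarrow> real"
  shows "(\<Sum>l\<in>UNIV. f l) = f N + (\<Sum>l\<in>UNIV - {N}. f l)"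
  by (simp add: sum.remove)

lemma prod_UNIV_split:
  fixes f :: "'n::finite \<Rightarrow> real"
  shows "(\<Prod>l\<in>UNIV. f l) = f N * (\<Prod>l\<in>UNIV - {N}. f l)"
  by (simp add: prod.remove)

lemma eig_poly:
  fixes A :: "'n::finite \<Rightarrow> 'n \<Rightarrow> real" and P Q :: "'n \<Rightarrow> 'n \<Rightarrow> real" and lam mu :: "'n \<Rightarrow> real"
  assumes Po: "\<forall>i j. (\<Sum>l\<in>UNIV. P l i * P l j) = (if i = j then 1 else 0)"
    and PA: "\<forall>i j. A i j = (\<Sum>l\<in>UNIV. P i l * lam l * P j l)"
    and Qo: "\<forall>i\<in>UNIV-{N}. \<forall>j\<in>UNIV-{N}. (\<Sum>l\<in>UNIV-{N}. Q l i * Q l j) = (if i = j then 1 else 0)"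
    and QA: "\<forall>i\<in>UNIV-{N}. \<forall>j\<in>UNIV-{N}. A i j = (\<Sum>l\<in>UNIV-{N}. Q i l * mu l * Q j l)"
    and t: "\<forall>l. 1 + t * lam l \<noteq> 0"
  shows "(\<Prod>l\<in>UNIV-{N}. 1 + t * mu l) = (\<Sum>m\<in>UNIV. (P N m)\<^sup>2 * (\<Prod>l\<in>UNIV-{m}. 1 + t * lam l))"
proof -
  have Pr: "(\<Sum>l\<in>UNIV. P i l * P j l) = (if i = j then 1 else 0)" for i j
    using orth_rows[OF Po] .
  have sym: "A i j = A j i" for i j using PA by (simp add: mult.commute mult.left_commute)
  define Bt where "Bt = (\<chi> i j. (if i = j then 1 else 0) + t * A i j :: real^'n^'n)"
  have "Bt = (\<chi> i j. (\<Sum>l\<in>UNIV. P i l * (1 + t * lam l) * P j l))"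
  proof -
    have "(\<Sum>l\<in>UNIV. P i l * (1 + t * lam l) * P j l) = (\<Sum>l\<in>UNIV. P i l * P j l) + t * (\<Sum>l\<in>UNIV. P i l * lam l * P j l)" for i j
      by (simp add: algebra_simps sum.distrib sum_distrib_left)
    then show ?thesis unfolding Bt_def using Pr PA by (simp add: vec_eq_iff)
  qed
  then have detB: "det Bt = (\<Prod>l\<in>UNIV. 1 + t * lam l)" using det_conj[OF Po] by simp
  define Q2 where "Q2 = (\<lambda>i j. if i = N \<or> j = N then (if i = j then 1 else 0) else Q i j)"
  have Q2o: "\<forall>i j. (\<Sum>l\<in>UNIV. Q2 l i * Q2 l j) = (if i = j then 1 else 0)"
  proof (intro allI)
    fix i j
    show "(\<Sum>l\<in>UNIV. Q2 l i * Q2 l j) = (if i = j then 1 else 0)"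
    proof (cases "i = N \<or> j = N")
      case True
      have "(\<Sum>l\<in>UNIV. Q2 l i * Q2 l j) = Q2 N i * Q2 N j + (\<Sum>l\<in>UNIV - {N}. Q2 l i * Q2 l j)"
        by (rule sum_UNIV_split)
      also have "(\<Sum>l\<in>UNIV - {N}. Q2 l i * Q2 l j) = 0"
        using True unfolding Q2_def by (intro sum.neutral) auto
      finally show ?thesis using True unfolding Q2_def by auto
    next
      case False
      have "(\<Sum>l\<in>UNIV. Q2 l i * Q2 l j) = Q2 N i * Q2 N j + (\<Sum>l\<in>UNIV - {N}. Q2 l i * Q2 l j)"
        by (rule sum_UNIV_split)
      also have "\<dots> = (\<Sum>l\<in>UNIV - {N}. Q l i * Q l j)"
      proof -
        have "Q2 N i * Q2 N j = 0" using False unfolding Q2_def by auto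
        moreover have "(\<Sum>l\<in>UNIV - {N}. Q2 l i * Q2 l j) = (\<Sum>l\<in>UNIV - {N}. Q l i * Q l j)"
          by (rule sum.cong) (use False in \<open>auto simp: Q2_def\<close>)
        ultimately show ?thesis by simp
      qed
      also have "\<dots> = (if i = j then 1 else 0)" using Qo False by auto
      finally show ?thesis .
    qed
  qed
  have Q2r: "(\<Sum>l\<in>UNIV. Q2 i l * Q2 j l) = (if i = j then 1 else 0)" for i j
    using orth_rows[OF Q2o] .
  define d where "d = (\<lambda>l. if l = N then 1 else 1 + t * mu l)"
  define Mt where "Mt = (\<chi> i j. if i = N \<or> j = N then (if i = j then 1 else 0) else (if i = j then 1 else 0) + t * A i j :: real^'n^'n)"
  have "Mt = (\<chi> i j. (\<Sum>l\<in>UNIV. Q2 i l * d l * Q2 j l))"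
  proof -
    have "Mt $ i $ j = (\<Sum>l\<in>UNIV. Q2 i l * d l * Q2 j l)" for i j
    proof (cases "i = N \<or> j = N")
      case True
      have "(\<Sum>l\<in>UNIV. Q2 i l * d l * Q2 j l) = Q2 i N * d N * Q2 j N + (\<Sum>l\<in>UNIV - {N}. Q2 i l * d l * Q2 j l)"
        by (rule sum_UNIV_split)
      also have "(\<Sum>l\<in>UNIV - {N}. Q2 i l * d l * Q2 j l) = 0"
        using True unfolding Q2_def by (intro sum.neutral) auto
      finally show ?thesis using True unfolding Mt_def Q2_def d_def by auto
    next
      case False
      have "(\<Sum>l\<in>UNIV. Q2 i l * d l * Q2 j l) = Q2 i N * d N * Q2 j N + (\<Sum>l\<in>UNIV - {N}. Q2 i l * d l * Q2 j l)"
        by (rule sum_UNIV_split)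
      also have "\<dots> = (\<Sum>l\<in>UNIV - {N}. Q i l * (1 + t * mu l) * Q j l)"
      proof -
        have "Q2 i N * d N * Q2 j N = 0" using False unfolding Q2_def by auto
        moreover have "(\<Sum>l\<in>UNIV - {N}. Q2 i l * d l * Q2 j l) = (\<Sum>l\<in>UNIV - {N}. Q i l * (1 + t * mu l) * Q j l)"
          by (rule sum.cong) (use False in \<open>auto simp: Q2_def d_def\<close>)
        ultimately show ?thesis by simp
      qed
      also have "\<dots> = (\<Sum>l\<in>UNIV - {N}. Q i l * Q j l) + t * (\<Sum>l\<in>UNIV - {N}. Q i l * mu l * Q j l)"
        by (simp add: algebra_simps sum.distrib sum_distrib_left)
      also have "(\<Sum>l\<in>UNIV - {N}. Q i l * Q j l) = (if i = j then 1 else 0)"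
      proof -
        have "(\<Sum>l\<in>UNIV. Q2 i l * Q2 j l) = Q2 i N * Q2 j N + (\<Sum>l\<in>UNIV - {N}. Q2 i l * Q2 j l)"
          by (rule sum_UNIV_split)
        also have "\<dots> = (\<Sum>l\<in>UNIV - {N}. Q i l * Q j l)"
        proof -
          have "Q2 i N * Q2 j N = 0" using False unfolding Q2_def by auto
          moreover have "(\<Sum>l\<in>UNIV - {N}. Q2 i l * Q2 j l) = (\<Sum>l\<in>UNIV - {N}. Q i l * Q j l)"
            by (rule sum.cong) (use False in \<open>auto simp: Q2_def\<close>)
          ultimately show ?thesis by simp
        qed
        finally show ?thesis using Q2r[of i j] by simp
      qed
      also have "(\<Sum>l\<in>UNIV - {N}. Q i l * mu l * Q j l) = A i j" using QA False by auto
      finally show ?thesis unfolding Mt_def using False by simp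
    qed
    then show ?thesis by (simp add: vec_eq_iff)
  qed
  then have "det Mt = (\<Prod>l\<in>UNIV. d l)" using det_conj[OF Q2o] by simp
  also have "\<dots> = (\<Prod>l\<in>UNIV-{N}. 1 + t * mu l)"
  proof -
    have "(\<Prod>l\<in>UNIV. d l) = d N * (\<Prod>l\<in>UNIV-{N}. d l)" by (rule prod_UNIV_split)
    moreover have "(\<Prod>l\<in>UNIV-{N}. d l) = (\<Prod>l\<in>UNIV-{N}. 1 + t * mu l)"
      by (rule prod.cong) (auto simp: d_def)
    ultimately show ?thesis by (simp add: d_def)
  qed
  finally have detM: "det Mt = (\<Prod>l\<in>UNIV-{N}. 1 + t * mu l)" .
  define Rt where "Rt = (\<chi> i j. if i = N then (if j = N then 1 else 0) else Bt $ i $ j :: real^'n^'n)"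
  define c where "c = (\<lambda>i. if i = N then 0 else - Bt $ i $ N)"
  have "Mt = (\<chi> i. row i Rt + c i *s row N Rt)"
    unfolding Mt_def Rt_def c_def Bt_def by (auto simp: vec_eq_iff row_def)
  then have detR: "det Rt = det Mt" using det_rowops[of c N Rt] unfolding c_def by simp
  define y where "y = (\<chi> j. (\<Sum>m\<in>UNIV. P j m * P N m / (1 + t * lam m)) :: real^'n)"
  have By: "Bt *v y = axis N 1"
  proof -
    have "(Bt *v y) $ i = (if i = N then 1 else 0)" for i
    proof -
      have "(Bt *v y) $ i = (\<Sum>j\<in>UNIV. ((if i = j then 1 else 0) + t * A i j) * y $ j)"
        unfolding Bt_def by (simp add: matrix_vector_mult_def)
      also have "\<dots> = y $ i + t * (\<Sum>j\<in>UNIV. A i j * y $ j)"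
      proof -
        have "((if i = j then 1 else 0) + t * A i j) * y $ j = (if i = j then y $ j else 0) + t * (A i j * y $ j)" for j
          by (simp add: algebra_simps)
        then show ?thesis by (simp add: sum.distrib sum_distrib_left)
      qed
      also have "(\<Sum>j\<in>UNIV. A i j * y $ j) = (\<Sum>l\<in>UNIV. P i l * lam l * P N l / (1 + t * lam l))"
      proof -
        define cc where "cc = (\<lambda>l m. P i l * lam l * (P N m / (1 + t * lam m)))"
        have pw: "A i j * y $ j = (\<Sum>l\<in>UNIV. \<Sum>m\<in>UNIV. cc l m * (P j l * P j m))" for j
        proof -
          have "A i j * y $ j = (\<Sum>l\<in>UNIV. P i l * lam l * P j l) * (\<Sum>m\<in>UNIV. P j m * P N m / (1 + t * lam m))"
            unfolding y_def PA[rule_format] by simp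
          also have "\<dots> = (\<Sum>l\<in>UNIV. \<Sum>m\<in>UNIV. (P i l * lam l * P j l) * (P j m * P N m / (1 + t * lam m)))"
            by (rule sum_product)
          also have "\<dots> = (\<Sum>l\<in>UNIV. \<Sum>m\<in>UNIV. cc l m * (P j l * P j m))"
            unfolding cc_def by (simp add: mult_ac)
          finally show ?thesis .
        qed
        have "(\<Sum>j\<in>UNIV. A i j * y $ j) = (\<Sum>j\<in>UNIV. \<Sum>l\<in>UNIV. \<Sum>m\<in>UNIV. cc l m * (P j l * P j m))"
          using pw by simp
        also have "\<dots> = (\<Sum>l\<in>UNIV. \<Sum>j\<in>UNIV. \<Sum>m\<in>UNIV. cc l m * (P j l * P j m))"
          by (rule sum.swap)
        also have "\<dots> = (\<Sum>l\<in>UNIV. \<Sum>m\<in>UNIV. \<Sum>j\<in>UNIV. cc l m * (P j l * P j m))"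
          by (rule sum.cong[OF refl], rule sum.swap)
        also have "\<dots> = (\<Sum>l\<in>UNIV. \<Sum>m\<in>UNIV. cc l m * (if l = m then 1 else 0))"
          by (simp add: sum_distrib_left[symmetric] Po[rule_format])
        also have "\<dots> = (\<Sum>l\<in>UNIV. cc l l)"
        proof (rule sum.cong[OF refl])
          fix l
          have "(\<Sum>m\<in>UNIV. cc l m * (if l = m then 1 else 0)) = (\<Sum>m\<in>UNIV. if l = m then cc l m else 0)"
            by (rule sum.cong) auto
          then show "(\<Sum>m\<in>UNIV. cc l m * (if l = m then 1 else 0)) = cc l l" by simp
        qed
        also have "\<dots> = (\<Sum>l\<in>UNIV. P i l * lam l * P N l / (1 + t * lam l))"
          unfolding cc_def by simp
        finally show ?thesis .
      qed
      also have "y $ i + t * (\<Sum>l\<in>UNIV. P i l * lam l * P N l / (1 + t * lam l)) = (\<Sum>l\<in>UNIV. P i l * P N l)"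
      proof -
        have "P i l * P N l / (1 + t * lam l) + t * (P i l * lam l * P N l / (1 + t * lam l)) = P i l * P N l" for l
        proof -
          have num: "P i l * P N l + t * (P i l * lam l * P N l) = (P i l * P N l) * (1 + t * lam l)"
            by (simp add: algebra_simps)
          have "P i l * P N l / (1 + t * lam l) + t * (P i l * lam l * P N l / (1 + t * lam l))
              = (P i l * P N l + t * (P i l * lam l * P N l)) / (1 + t * lam l)"
            by (simp add: add_divide_distrib)
          also have "\<dots> = (P i l * P N l) * (1 + t * lam l) / (1 + t * lam l)" by (simp only: num)
          also have "\<dots> = P i l * P N l" using t[rule_format, of l] by simp
          finally show ?thesis .
        qed
        then show ?thesis unfolding y_def by (simp add: sum_distrib_left sum.distrib[symmetric])
      qed
      also have "\<dots> = (if i = N then 1 else 0)" using Pr[of i N] by simp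
      finally show ?thesis .
    qed
    then show ?thesis by (simp add: vec_eq_iff axis_def)
  qed
  have "det (\<chi> i j. if j = N then (Bt *v y) $ i else Bt $ i $ j) = y $ N * det Bt" by (rule cramer_lemma)
  moreover have "(\<chi> i j. if j = N then (Bt *v y) $ i else Bt $ i $ j) = transpose Rt"
    unfolding By unfolding Rt_def Bt_def by (auto simp: vec_eq_iff transpose_def axis_def sym)
  ultimately have "det Rt = y $ N * det Bt" by simp
  then have "(\<Prod>l\<in>UNIV-{N}. 1 + t * mu l) = (\<Sum>m\<in>UNIV. P N m * P N m / (1 + t * lam m)) * (\<Prod>l\<in>UNIV. 1 + t * lam l)"
    using detR detM detB unfolding y_def by simp
  also have "\<dots> = (\<Sum>m\<in>UNIV. (P N m)\<^sup>2 * (\<Prod>l\<in>UNIV-{m}. 1 + t * lam l))"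
    unfolding sum_distrib_right
  proof (rule sum.cong)
    fix m :: 'n
    have "(\<Prod>l\<in>UNIV. 1 + t * lam l) = (1 + t * lam m) * (\<Prod>l\<in>UNIV-{m}. 1 + t * lam l)"
      by (rule prod_UNIV_split)
    then show "P N m * P N m / (1 + t * lam m) * (\<Prod>l\<in>UNIV. 1 + t * lam l) = (P N m)\<^sup>2 * (\<Prod>l\<in>UNIV-{m}. 1 + t * lam l)"
      using t[rule_format, of m] by (simp add: power2_eq_square)
  qed simp
  finally show ?thesis .
qed


lemma tangential_sigma:
  fixes A :: "'n::finite \<Rightarrow> 'n \<Rightarrow> real" and P Q :: "'n \<Rightarrow> 'n \<Rightarrow> real" and lam mu :: "'n \<Rightarrow> real"
  assumes Po: "\<forall>i j. (\<Sum>l\<in>UNIV. P l i * P l j) = (if i = j then 1 else 0)"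
    and PA: "\<forall>i j. A i j = (\<Sum>l\<in>UNIV. P i l * lam l * P j l)"
    and Qo: "\<forall>i\<in>UNIV-{N}. \<forall>j\<in>UNIV-{N}. (\<Sum>l\<in>UNIV-{N}. Q l i * Q l j) = (if i = j then 1 else 0)"
    and QA: "\<forall>i\<in>UNIV-{N}. \<forall>j\<in>UNIV-{N}. A i j = (\<Sum>l\<in>UNIV-{N}. Q i l * mu l * Q j l)"
  shows "sigma_on (UNIV-{N}) s mu = (\<Sum>m\<in>UNIV. (P N m)\<^sup>2 * sigma_on (UNIV-{m}) s lam)"
proof -
  define M where "M = CARD('n) - 1"
  have cardN: "card (UNIV - {x::'n}) = M" for x unfolding M_def by (simp add: card_Diff_singleton)
  define c where "c = (\<lambda>s. sigma_on (UNIV-{N}) s mu - (\<Sum>m\<in>UNIV. (P N m)\<^sup>2 * sigma_on (UNIV-{m}) s lam))"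
  define bad where "bad = (\<lambda>l. - 1 / lam l) ` (UNIV :: 'n set)"
  have finbad: "finite bad" unfolding bad_def by simp
  have root: "(\<Sum>s\<le>M. c s * t ^ s) = 0" if "t \<notin> bad" for t
  proof -
    have tt: "\<forall>l. 1 + t * lam l \<noteq> 0"
    proof
      fix l show "1 + t * lam l \<noteq> 0"
      proof
        assume "1 + t * lam l = 0"
        then have "t = - 1 / lam l" by (cases "lam l = 0") (auto simp: field_simps)
        then show False using that unfolding bad_def by auto
      qed
    qed
    have "(\<Sum>s\<le>M. sigma_on (UNIV-{N}) s mu * t ^ s) = (\<Prod>l\<in>UNIV-{N}. 1 + t * mu l)"
      using sig_expand[of "UNIV-{N}" M t mu] cardN by simp
    also have "\<dots> = (\<Sum>m\<in>UNIV. (P N m)\<^sup>2 * (\<Prod>l\<in>UNIV-{m}. 1 + t * lam l))"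
      by (rule eig_poly[OF Po PA Qo QA tt])
    also have "\<dots> = (\<Sum>m\<in>UNIV. (P N m)\<^sup>2 * (\<Sum>s\<le>M. sigma_on (UNIV-{m}) s lam * t ^ s))"
      using sig_expand[of "UNIV-{_}" M t lam] cardN by simp
    also have "\<dots> = (\<Sum>s\<le>M. (\<Sum>m\<in>UNIV. (P N m)\<^sup>2 * sigma_on (UNIV-{m}) s lam) * t ^ s)"
      by (simp add: sum_distrib_left sum_distrib_right mult_ac sum.swap[of _ UNIV "{..M}"])
    finally show ?thesis unfolding c_def by (simp add: algebra_simps sum_subtractf)
  qed
  have "\<not> finite {t. (\<Sum>s\<le>M. c s * t ^ s) = 0}"
  proof
    assume "finite {t. (\<Sum>s\<le>M. c s * t ^ s) = 0}"
    then have "finite (bad \<union> {t. (\<Sum>s\<le>M. c s * t ^ s) = 0})" using finbad by simp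
    moreover have "bad \<union> {t. (\<Sum>s\<le>M. c s * t ^ s) = 0} = UNIV" using root by auto
    ultimately have "finite (UNIV :: real set)" by simp
    then show False by (simp add: infinite_UNIV_char_0)
  qed
  then have c0: "\<forall>k\<le>M. c k = 0" using polyfun_finite_roots[of c M] by auto
  show ?thesis
  proof (cases "s \<le> M")
    case True then show ?thesis using c0 unfolding c_def by simp
  next
    case False
    then have "sigma_on (UNIV-{x}) s lam' = 0" for x and lam' :: "'n \<Rightarrow> real"
      using cardN by (intro sig_big) auto
    then show ?thesis by simp
  qed
qed

lemma trace_sigma1:
  fixes A :: "'n::finite \<Rightarrow> 'n \<Rightarrow> real"
  assumes "eig_on UNIV A lam"
  shows "(\<Sum>i\<in>UNIV. A i i) = sigma_on UNIV 1 lam"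
proof -
  obtain P where Po: "\<forall>i j. (\<Sum>l\<in>UNIV. P l i * P l j) = (if i = j then 1 else 0)"
    and PA: "\<forall>i j. A i j = (\<Sum>l\<in>UNIV. P i l * lam l * P j l)"
    using assms unfolding eig_on_def by auto
  have "(\<Sum>i\<in>UNIV. A i i) = (\<Sum>i\<in>UNIV. \<Sum>l\<in>UNIV. lam l * (P i l * P i l))"
    using PA by (simp add: mult_ac)
  also have "\<dots> = (\<Sum>l\<in>UNIV. lam l * (\<Sum>i\<in>UNIV. P i l * P i l))"
    by (subst sum.swap) (simp add: sum_distrib_left)
  also have "\<dots> = (\<Sum>l\<in>UNIV. lam l)" using Po by simp
  finally show ?thesis using sig_one[of UNIV lam] by simp
qed

lemma odd_power_nonpos: "odd n \<Longrightarrow> (x::real) \<le> 0 \<Longrightarrow> x ^ n \<le> 0"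
proof -
  assume "odd n" "x \<le> 0"
  then have "(- x) ^ n = - (x ^ n)" by (simp add: power_minus_odd)
  moreover have "(- x) ^ n \<ge> 0" using \<open>x \<le> 0\<close> by simp
  ultimately show ?thesis by simp
qed

lemma h_pos:
  fixes A :: "'n::finite \<Rightarrow> 'n \<Rightarrow> real"
  assumes k: "1 \<le> k"
    and eig: "eig_on UNIV A lam" and gam: "Gamma_plus UNIV k lam"
    and eigT: "eig_on (UNIV - {N}) A lamT" and B: "B_k k (UNIV - {N}) lamT h > 0"
  shows "h > 0"
proof (rule ccontr)
  assume "\<not> h > 0"
  then have h: "h \<le> 0" by simp
  obtain P where Po: "\<forall>i j. (\<Sum>l\<in>UNIV. P l i * P l j) = (if i = j then 1 else 0)"
    and PA: "\<forall>i j. A i j = (\<Sum>l\<in>UNIV. P i l * lam l * P j l)"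
    using eig unfolding eig_on_def by auto
  obtain Q where Qo: "\<forall>i\<in>UNIV-{N}. \<forall>j\<in>UNIV-{N}. (\<Sum>l\<in>UNIV-{N}. Q l i * Q l j) = (if i = j then 1 else 0)"
    and QA: "\<forall>i\<in>UNIV-{N}. \<forall>j\<in>UNIV-{N}. A i j = (\<Sum>l\<in>UNIV-{N}. Q i l * lamT l * Q j l)"
    using eigT unfolding eig_on_def by auto
  have pos: "\<forall>j\<in>{1..k}. sigma_on UNIV j lam > 0" using gam unfolding Gamma_plus_def .
  have sT: "sigma_on (UNIV - {N}) s lamT \<ge> 0" if "s \<le> k - 1" for s
  proof -
    have "sigma_on (UNIV - {N}) s lamT = (\<Sum>m\<in>UNIV. (P N m)\<^sup>2 * sigma_on (UNIV-{m}) s lam)"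
      by (rule tangential_sigma[OF Po PA Qo QA])
    also have "\<dots> \<ge> 0"
    proof (rule sum_nonneg)
      fix m :: 'n
      have "sigma_on (UNIV-{m}) s lam > 0" using gamma_delete[OF _ _ pos that] by simp
      then show "(P N m)\<^sup>2 * sigma_on (UNIV-{m}) s lam \<ge> 0" by simp
    qed
    finally show ?thesis .
  qed
  define n where "n = CARD('n)"
  have "B_k k (UNIV - {N}) lamT h = real (fact (n - 1)) / (real (fact (n - k)) * real (dfact (2 * k - 1))) * h ^ (2 * k - 1)
    + (\<Sum>s = 1..k - 1. real (fact (n - 1 - s)) / (real (fact (n - k)) * real (dfact (2 * k - 2 * s - 1)))
                        * sigma_on (UNIV - {N}) s lamT * h ^ (2 * k - 2 * s - 1))"
    unfolding B_k_def n_def Let_def by simp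
  also have "\<dots> \<le> 0"
  proof (rule add_nonpos_nonpos)
    have "odd (2 * k - 1)" using k by presburger
    have hk: "h ^ (2 * k - 1) \<le> 0" using \<open>odd (2 * k - 1)\<close> h by (rule odd_power_nonpos)
    show "real (fact (n - 1)) / (real (fact (n - k)) * real (dfact (2 * k - 1))) * h ^ (2 * k - 1) \<le> 0"
      by (rule mult_nonneg_nonpos[OF _ hk]) simp
    show "(\<Sum>s = 1..k - 1. real (fact (n - 1 - s)) / (real (fact (n - k)) * real (dfact (2 * k - 2 * s - 1)))
                        * sigma_on (UNIV - {N}) s lamT * h ^ (2 * k - 2 * s - 1)) \<le> 0"
    proof (rule sum_nonpos)
      fix s assume s: "s \<in> {1..k - 1}"
      have "odd (2 * k - 2 * s - 1)" using s by auto
      then have hp: "h ^ (2 * k - 2 * s - 1) \<le> 0" using h by (rule odd_power_nonpos)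
      have "real (fact (n - 1 - s)) / (real (fact (n - k)) * real (dfact (2 * k - 2 * s - 1)))
                        * sigma_on (UNIV - {N}) s lamT \<ge> 0"
        using sT[of s] s by simp
      then show "real (fact (n - 1 - s)) / (real (fact (n - k)) * real (dfact (2 * k - 2 * s - 1)))
                        * sigma_on (UNIV - {N}) s lamT * h ^ (2 * k - 2 * s - 1) \<le> 0"
        using hp by (rule mult_nonneg_nonpos)
    qed
  qed
  finally show False using B by simp
qed

lemma second_order_min:
  fixes f f' :: "real \<Rightarrow> real"
  assumes e: "\<epsilon> > 0" and d: "\<forall>t. \<bar>t\<bar> < \<epsilon> \<longrightarrow> (f has_real_derivative f' t) (at t)"
    and d2: "(f' has_real_derivative L) (at 0)" and mn: "\<forall>t. \<bar>t\<bar> < \<epsilon> \<longrightarrow> f 0 \<le> f t"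
  shows "L \<ge> 0"
proof (rule ccontr)
  assume "\<not> L \<ge> 0"
  then have L: "L < 0" by simp
  have f'0: "f' 0 = 0"
    using DERIV_local_min[of f "f' 0" 0 \<epsilon>] d e mn by auto
  have "((\<lambda>y. (f' y - f' 0) / (y - 0)) \<longlongrightarrow> L) (at 0)"
    using d2 by (simp add: has_field_derivative_iff)
  then have "\<forall>\<^sub>F y in at 0. (f' y - f' 0) / (y - 0) < 0" using L by (rule order_tendstoD(2))
  then obtain \<delta> where \<delta>: "\<delta> > 0" "\<forall>y. y \<noteq> 0 \<and> dist y 0 < \<delta> \<longrightarrow> (f' y - f' 0) / (y - 0) < 0"
    unfolding eventually_at by auto
  define t where "t = min \<epsilon> \<delta> / 2"
  have t: "0 < t" "t < \<epsilon>" "t < \<delta>" unfolding t_def using e \<delta> by auto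
  have "\<forall>s. 0 \<le> s \<and> s \<le> t \<longrightarrow> (f has_real_derivative f' s) (at s)" using d t by auto
  then obtain z where z: "0 < z" "z < t" "f t - f 0 = (t - 0) * f' z"
    using MVT2[of 0 t f f'] t by auto
  have "f' z / z < 0" using \<delta>(2)[rule_format, of z] z t f'0 by (auto simp: dist_real_def)
  then have "f' z < 0" using z by (simp add: divide_less_0_iff)
  then have "t * f' z < 0" using t by (simp add: mult_pos_neg)
  then have "f t < f 0" using z by simp
  moreover have "f 0 \<le> f t" using mn t by auto
  ultimately show False by simp
qed

lemma one_sided_min:
  fixes f :: "real \<Rightarrow> real"
  assumes d: "(f has_real_derivative L) (at 0 within {0..})" and L: "L < 0" and e: "\<epsilon> > 0"
    and mn: "\<forall>t. 0 \<le> t \<and> t < \<epsilon> \<longrightarrow> f 0 \<le> f t"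
  shows False
proof -
  have "((\<lambda>y. (f y - f 0) / (y - 0)) \<longlongrightarrow> L) (at 0 within {0..})"
    using d by (simp add: has_field_derivative_iff)
  then have "\<forall>\<^sub>F y in at 0 within {0..}. (f y - f 0) / (y - 0) < 0" using L by (rule order_tendstoD(2))
  then obtain \<delta> where \<delta>: "\<delta> > 0" "\<forall>y\<in>{0..}. y \<noteq> 0 \<and> dist y 0 < \<delta> \<longrightarrow> (f y - f 0) / (y - 0) < 0"
    unfolding eventually_at by auto
  define t where "t = min \<epsilon> \<delta> / 2"
  have t: "0 < t" "t < \<epsilon>" "t < \<delta>" unfolding t_def using e \<delta> by auto
  have "(f t - f 0) / t < 0" using \<delta>(2)[rule_format, of t] t by (auto simp: dist_real_def)
  then have "f t < f 0" using t by (simp add: divide_less_0_iff)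
  moreover have "f 0 \<le> f t" using mn t by auto
  ultimately show False by simp
qed

lemma line_deriv:
  fixes u :: "real^'n::finite \<Rightarrow> real" and p e Du :: "real^'n"
  assumes du: "(u has_derivative (\<lambda>h. Du \<bullet> h)) (at (p + t *\<^sub>R e) within S)"
    and img: "(\<lambda>s. p + s *\<^sub>R e) ` T \<subseteq> S"
  shows "((\<lambda>s. u (p + s *\<^sub>R e)) has_real_derivative (Du \<bullet> e)) (at t within T)"
proof -
  have l: "((\<lambda>s. p + s *\<^sub>R e) has_derivative (\<lambda>h. h *\<^sub>R e)) (at t within T)"
    by (auto intro!: derivative_eq_intros)
  have du': "(u has_derivative (\<lambda>h. Du \<bullet> h)) (at (p + t *\<^sub>R e) within (\<lambda>s. p + s *\<^sub>R e) ` T)"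
    by (rule has_derivative_subset[OF du img])
  have "((u \<circ> (\<lambda>s. p + s *\<^sub>R e)) has_derivative ((\<lambda>h. Du \<bullet> h) \<circ> (\<lambda>h. h *\<^sub>R e))) (at t within T)"
    by (rule diff_chain_within[OF l]) (use du' in simp)
  moreover have "((\<lambda>h. Du \<bullet> h) \<circ> (\<lambda>h. h *\<^sub>R e)) = (*) (Du \<bullet> e)"
    by (auto simp: fun_eq_iff)
  ultimately show ?thesis unfolding has_field_derivative_def by (simp add: comp_def)
qed

lemma line_deriv2:
  fixes Du :: "real^'n::finite \<Rightarrow> real^'n" and p :: "real^'n"
  assumes "(Du has_derivative (\<lambda>h. D2 *v h)) (at p)"
  shows "((\<lambda>s. Du (p + s *\<^sub>R axis i 1) $ i) has_real_derivative D2 $ i $ i) (at 0)"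
proof -
  have l: "((\<lambda>s. p + s *\<^sub>R axis i 1) has_derivative (\<lambda>h. h *\<^sub>R axis i 1)) (at 0)"
    by (auto intro!: derivative_eq_intros)
  have "((\<lambda>s. Du (p + s *\<^sub>R axis i 1)) has_derivative (\<lambda>h. D2 *v (h *\<^sub>R axis i 1))) (at 0)"
    using has_derivative_compose[OF l] assms by simp
  then have "((\<lambda>s. Du (p + s *\<^sub>R axis i 1) $ i) has_derivative (\<lambda>h. (D2 *v (h *\<^sub>R axis i 1)) $ i)) (at 0)"
    by (rule bounded_linear.has_derivative[OF bounded_linear_vec_nth])
  moreover have "(\<lambda>h. (D2 *v (h *\<^sub>R axis i 1)) $ i) = (*) (D2 $ i $ i)"
    by (auto simp: fun_eq_iff matrix_vector_mult_def axis_def if_distrib if_distribR sum.If_cases)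
  ultimately show ?thesis unfolding has_field_derivative_def by simp
qed


lemma ph_deriv1:
  fixes a b C \<alpha> t :: real
  assumes Q: "a + 2 * b * t + t\<^sup>2 > 0"
  shows "((\<lambda>s. C * (a + 2 * b * s + s\<^sup>2) powr \<alpha>) has_real_derivative
           C * \<alpha> * (2 * b + 2 * t) * (a + 2 * b * t + t\<^sup>2) powr (\<alpha> - 1)) (at t)"
proof -
  have dQ: "((\<lambda>s. a + 2 * b * s + s\<^sup>2) has_real_derivative (2 * b + 2 * t)) (at t)"
    by (auto intro!: derivative_eq_intros)
  have "((\<lambda>s. (a + 2 * b * s + s\<^sup>2) powr \<alpha>) has_real_derivative
         (a + 2 * b * t + t\<^sup>2) powr \<alpha> * (0 * ln (a + 2 * b * t + t\<^sup>2) + (2 * b + 2 * t) * \<alpha> / (a + 2 * b * t + t\<^sup>2))) (at t)"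
    by (rule DERIV_powr[OF dQ Q DERIV_const])
  from DERIV_cmult[OF this, where c = C] show ?thesis
    by (rule DERIV_cong) (use Q in \<open>simp add: powr_diff\<close>)
qed

lemma ph_deriv2:
  fixes a b C \<alpha> :: real
  assumes a: "a > 0"
  shows "((\<lambda>s. C * \<alpha> * (2 * b + 2 * s) * (a + 2 * b * s + s\<^sup>2) powr (\<alpha> - 1)) has_real_derivative
           C * \<alpha> * (2 * a powr (\<alpha> - 1) + 2 * b * ((\<alpha> - 1) * (2 * b) * a powr (\<alpha> - 1) / a))) (at 0)"
proof -
  have Q: "a + 2 * b * 0 + 0\<^sup>2 > 0" using a by simp
  have dQ: "((\<lambda>s. a + 2 * b * s + s\<^sup>2) has_real_derivative (2 * b + 2 * 0)) (at 0)"
    by (auto intro!: derivative_eq_intros)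
  have dP: "((\<lambda>s. (a + 2 * b * s + s\<^sup>2) powr (\<alpha> - 1)) has_real_derivative
         (a + 2 * b * 0 + 0\<^sup>2) powr (\<alpha> - 1) * (0 * ln (a + 2 * b * 0 + 0\<^sup>2) + (2 * b + 2 * 0) * (\<alpha> - 1) / (a + 2 * b * 0 + 0\<^sup>2))) (at 0)"
    by (rule DERIV_powr[OF dQ Q DERIV_const])
  have dL: "((\<lambda>s. C * \<alpha> * (2 * b + 2 * s)) has_real_derivative C * \<alpha> * 2) (at 0)"
    by (auto intro!: derivative_eq_intros)
  from DERIV_mult'[OF dL dP] show ?thesis
    by (rule DERIV_cong) (simp add: algebra_simps)
qed

lemma ph_sum:
  fixes b :: "'n::finite \<Rightarrow> real" and a C \<alpha> :: real
  assumes a: "a > 0" and ab: "(\<Sum>i\<in>UNIV. (b i)\<^sup>2) = a" and al: "\<alpha> = (2 - real CARD('n)) / 2"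
  shows "(\<Sum>i\<in>UNIV. C * \<alpha> * (2 * a powr (\<alpha> - 1) + 2 * b i * ((\<alpha> - 1) * (2 * b i) * a powr (\<alpha> - 1) / a))) = 0"
proof -
  have "(\<Sum>i\<in>UNIV. C * \<alpha> * (2 * a powr (\<alpha> - 1) + 2 * b i * ((\<alpha> - 1) * (2 * b i) * a powr (\<alpha> - 1) / a)))
      = (\<Sum>i\<in>UNIV. C * \<alpha> * a powr (\<alpha> - 1) * 2 + (C * \<alpha> * a powr (\<alpha> - 1) * 4 * (\<alpha> - 1) / a) * (b i)\<^sup>2)"
    by (rule sum.cong) (simp_all add: algebra_simps power2_eq_square)
  also have "\<dots> = C * \<alpha> * a powr (\<alpha> - 1) * 2 * real CARD('n) + (C * \<alpha> * a powr (\<alpha> - 1) * 4 * (\<alpha> - 1) / a) * a"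
    by (simp only: sum.distrib sum_distrib_left[symmetric] ab) simp
  also have "\<dots> = C * \<alpha> * a powr (\<alpha> - 1) * (2 * real CARD('n) + 4 * (\<alpha> - 1))"
  proof -
    have "(C * \<alpha> * a powr (\<alpha> - 1) * 4 * (\<alpha> - 1) / a) * a = C * \<alpha> * a powr (\<alpha> - 1) * 4 * (\<alpha> - 1)"
      using a by simp
    then show ?thesis by (simp add: algebra_simps)
  qed
  also have "2 * real CARD('n) + 4 * (\<alpha> - 1) = 0" unfolding al by (simp add: field_simps)
  finally show ?thesis by simp
qed

lemma norm_line:
  fixes p x :: "real^'n::finite"
  shows "(norm (p + t *\<^sub>R axis i 1 - x))\<^sup>2 = (norm (p - x))\<^sup>2 + 2 * (p - x) $ i * t + t\<^sup>2"
proof -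
  have e: "p + t *\<^sub>R axis i 1 - x = (p - x) + t *\<^sub>R axis i 1" by (simp add: algebra_simps)
  show ?thesis unfolding e dot_square_norm[symmetric]
  proof -
    have a1: "axis i 1 \<bullet> (p - x) = (p - x) $ i" by (simp add: inner_commute[of "axis i 1"] inner_axis)
    have a2: "(p - x) \<bullet> axis i 1 = (p - x) $ i" by (simp add: inner_axis)
    have a3: "axis i 1 \<bullet> axis i (1::real) = 1" by (simp add: inner_axis_axis)
    show "((p - x) + t *\<^sub>R axis i 1) \<bullet> ((p - x) + t *\<^sub>R axis i 1) = (p - x) \<bullet> (p - x) + 2 * (p - x) $ i * t + t\<^sup>2"
      by (simp only: inner_add_left inner_add_right inner_scaleR_left inner_scaleR_right a1 a2 a3)
        (simp add: power2_eq_square algebra_simps)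
  qed
qed

lemma powr_conv:
  fixes d :: real
  assumes d: "d > 0" and k: "k \<ge> 2"
  shows "(d\<^sup>2) powr ((2 - real k) / 2) = 1 / d ^ (k - 2)"
proof -
  have e1: "d\<^sup>2 = d powr 2" using powr_realpow[OF d, of 2] by simp
  have e2: "2 * ((2 - real k) / 2) = - real (k - 2)" using k by (simp add: of_nat_diff)
  have "(d\<^sup>2) powr ((2 - real k) / 2) = d powr (2 * ((2 - real k) / 2))"
    unfolding e1 by (rule powr_powr)
  also have "\<dots> = d powr (- real (k - 2))" unfolding e2 ..
  also have "\<dots> = inverse (d powr real (k - 2))" by (rule powr_minus)
  also have "\<dots> = 1 / d ^ (k - 2)" using powr_realpow[OF d, of "k - 2"] by (simp add: divide_inverse)
  finally show ?thesis .
qed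

lemma sum_sq_norm:
  fixes v :: "real^'n::finite"
  shows "(\<Sum>i\<in>UNIV. (v $ i)\<^sup>2) = (norm v)\<^sup>2"
  unfolding dot_square_norm[symmetric] inner_vec_def by (simp add: power2_eq_square)


lemma lower_bound:
  fixes u :: "real^'n::finite \<Rightarrow> real" and Du :: "real^'n \<Rightarrow> real^'n"
    and D2u :: "real^'n \<Rightarrow> real^'n^'n" and N :: 'n
  assumes n3: "CARD('n) \<ge> 3"
    and H: "H = {z. z $ N \<ge> 0}"
    and du: "\<forall>z\<in>H. (u has_derivative (\<lambda>h. Du z \<bullet> h)) (at z within H)"
    and d2u: "\<forall>z\<in>H. (Du has_derivative (\<lambda>h. D2u z *v h)) (at z within H)"
    and pos: "\<forall>z\<in>H. u z > 0"
    and lap: "\<forall>z\<in>H. (\<Sum>i\<in>UNIV. D2u z $ i $ i) < 0"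
    and neu: "\<forall>z\<in>H. z $ N = 0 \<longrightarrow> Du z $ N < 0"
    and x: "x $ N = 0" and r0: "r0 > 0" and m: "m > 0"
    and sph: "\<forall>z\<in>H. dist z x = r0 \<longrightarrow> u z \<ge> m"
  shows "\<forall>y\<in>H. dist y x \<ge> r0 \<longrightarrow> u y \<ge> m * r0 ^ (CARD('n) - 2) / (dist y x) ^ (CARD('n) - 2)"
proof (rule ccontr)
  define k2 where "k2 = CARD('n) - 2"
  have k2: "k2 \<ge> 1" unfolding k2_def using n3 by simp
  define C where "C = m * r0 ^ k2"
  have C: "C > 0" unfolding C_def using m r0 by simp
  define \<alpha> where "\<alpha> = (2 - real CARD('n)) / 2"
  have F1: "C * ((norm (z - x))\<^sup>2) powr \<alpha> = C / (dist z x) ^ k2" if "z \<noteq> x" for z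
  proof -
    have "norm (z - x) > 0" using that by simp
    from powr_conv[OF this, of "CARD('n)"] n3 show ?thesis
      unfolding \<alpha>_def k2_def by (simp add: dist_norm)
  qed
  have contu: "continuous_on H u"
    using du by (metis continuous_on_eq_continuous_within has_derivative_continuous)
  assume "\<not> (\<forall>y\<in>H. dist y x \<ge> r0 \<longrightarrow> u y \<ge> m * r0 ^ (CARD('n) - 2) / (dist y x) ^ (CARD('n) - 2))"
  then obtain y where y: "y \<in> H" "dist y x \<ge> r0" "u y < C / (dist y x) ^ k2"
    unfolding C_def k2_def by auto
  define \<delta> where "\<delta> = C / (dist y x) ^ k2 - u y"
  have \<delta>: "\<delta> > 0" unfolding \<delta>_def using y by simp
  define R where "R = dist y x + 2 * C / \<delta> + 1"
  have q: "2 * C / \<delta> > 0" using C \<delta> by simp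
  have R1: "R \<ge> 1" and Ry: "R > dist y x" unfolding R_def using q zero_le_dist[of y x] by linarith+
  have RC: "C / R ^ k2 < \<delta> / 2"
  proof -
    have "R ^ 1 \<le> R ^ k2" using R1 k2 by (intro power_increasing) auto
    then have "C / R ^ k2 \<le> C / R" using C R1 by (intro divide_left_mono) auto
    also have "C / R < \<delta> / 2"
    proof -
      have "2 * C / \<delta> < R" unfolding R_def using r0 y by simp
      then have "2 * C < R * \<delta>" using \<delta> by (simp add: divide_less_eq)
      then show ?thesis using R1 by (simp add: divide_less_eq mult.commute)
    qed
    finally show ?thesis .
  qed
  define K2 where "K2 = {z\<in>H. r0 \<le> dist z x \<and> dist z x \<le> R}"
  have K2eq: "K2 = H \<inter> (cball x R - ball x r0)" unfolding K2_def by (auto simp: dist_commute)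
  have clH: "closed H" unfolding H by (rule closed_halfspace_component_ge_cart)
  have cK2: "compact K2" unfolding compact_eq_bounded_closed K2eq
    by (auto intro!: closed_Int closed_Diff clH bounded_Int)
  have yK2: "y \<in> K2" unfolding K2_def using y Ry by simp
  define W where "W = (\<lambda>z. u z - C / (dist z x) ^ k2)"
  have "continuous_on K2 W"
  proof -
    have "continuous_on K2 u" using contu by (rule continuous_on_subset) (auto simp: K2_def)
    moreover have "\<forall>z\<in>K2. (dist z x) ^ k2 \<noteq> 0" unfolding K2_def using r0 by auto
    ultimately show ?thesis unfolding W_def by (intro continuous_intros) auto
  qed
  then obtain p where pK: "p \<in> K2" and pmin: "\<forall>z\<in>K2. W p \<le> W z"
    using continuous_attains_inf[OF cK2] yK2 by blast
  have pH: "p \<in> H" and pd: "r0 \<le> dist p x" "dist p x \<le> R" using pK unfolding K2_def by auto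
  have Wp: "W p \<le> - \<delta>" using pmin yK2 unfolding W_def \<delta>_def by force
  have upos: "u p > 0" using pos pH by simp
  have d1: "dist p x \<noteq> r0"
  proof
    assume "dist p x = r0"
    then have "u p \<ge> m" using sph pH by simp
    moreover have "C / (dist p x) ^ k2 = m" using \<open>dist p x = r0\<close> r0 unfolding C_def by simp
    ultimately have "W p \<ge> 0" unfolding W_def by simp
    then show False using Wp \<delta> by simp
  qed
  have d2: "dist p x \<noteq> R"
  proof
    assume "dist p x = R"
    then have "W p = u p - C / R ^ k2" unfolding W_def by simp
    then have "W p > - \<delta> / 2" using RC upos by linarith
    then show False using Wp \<delta> by simp
  qed
  define \<epsilon>0 where "\<epsilon>0 = min (dist p x - r0) (R - dist p x)"
  have \<epsilon>0: "\<epsilon>0 > 0" unfolding \<epsilon>0_def using pd d1 d2 by simp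
  have near: "W p \<le> W z" if "z \<in> H" "dist z p < \<epsilon>0" for z
  proof -
    have t1: "dist z x \<le> dist z p + dist p x" by (rule dist_triangle)
    have t2: "dist p x \<le> dist p z + dist z x" by (rule dist_triangle)
    have e: "\<epsilon>0 \<le> dist p x - r0" "\<epsilon>0 \<le> R - dist p x" unfolding \<epsilon>0_def by auto
    have dz: "dist p z < \<epsilon>0" "dist z p < \<epsilon>0" using that(2) by (simp_all add: dist_commute)
    have "r0 \<le> dist z x" "dist z x \<le> R" using t1 t2 e dz by linarith+
    then have "z \<in> K2" unfolding K2_def using that(1) by simp
    then show ?thesis using pmin by simp
  qed
  have px: "p \<noteq> x" using pd r0 by auto
  define a where "a = (norm (p - x))\<^sup>2"
  have a: "a > 0" unfolding a_def using px by simp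
  define b where "b = (\<lambda>i. (p - x) $ i)"
  define ph where "ph = (\<lambda>i t. C * (a + 2 * b i * t + t\<^sup>2) powr \<alpha>)"
  define ph1 where "ph1 = (\<lambda>i t. C * \<alpha> * (2 * b i + 2 * t) * (a + 2 * b i * t + t\<^sup>2) powr (\<alpha> - 1))"
  define ph2 where "ph2 = (\<lambda>i. C * \<alpha> * (2 * a powr (\<alpha> - 1) + 2 * b i * ((\<alpha> - 1) * (2 * b i) * a powr (\<alpha> - 1) / a)))"
  have Wline: "W (p + t *\<^sub>R axis i 1) = u (p + t *\<^sub>R axis i 1) - ph i t" if "p + t *\<^sub>R axis i 1 \<noteq> x" for i t
  proof -
    have "C / (dist (p + t *\<^sub>R axis i 1) x) ^ k2 = C * ((norm (p + t *\<^sub>R axis i 1 - x))\<^sup>2) powr \<alpha>"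
      using F1[OF that] by simp
    also have "\<dots> = ph i t" unfolding ph_def a_def b_def norm_line by simp
    finally show ?thesis unfolding W_def by simp
  qed
  have Qpos: "a + 2 * b i * t + t\<^sup>2 > 0" if "p + t *\<^sub>R axis i 1 \<noteq> x" for i t
    using that norm_line[of p t i x] unfolding a_def b_def by (metis eq_iff_diff_eq_0 zero_less_norm_iff zero_less_power)
  have dph: "(ph i has_real_derivative ph1 i t) (at t)" if "p + t *\<^sub>R axis i 1 \<noteq> x" for i t
    unfolding ph_def ph1_def by (rule ph_deriv1[OF Qpos[OF that]])
  have dph1: "(ph1 i has_real_derivative ph2 i) (at 0)" for i
    unfolding ph1_def ph2_def by (rule ph_deriv2[OF a])
  have lx: "p + t *\<^sub>R axis i 1 \<noteq> x" if "\<bar>t\<bar> < \<epsilon>0" for i t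
  proof
    assume "p + t *\<^sub>R axis i 1 = x"
    then have "p - x = - (t *\<^sub>R axis i 1)" by (simp add: algebra_simps)
    then have "dist p x = norm (t *\<^sub>R axis i (1::real))" by (simp add: dist_norm)
    then have "dist p x = \<bar>t\<bar>" by simp
    then show False using that pd r0 unfolding \<epsilon>0_def by simp
  qed
  show False
  proof (cases "p $ N > 0")
    case True
    define \<epsilon> where "\<epsilon> = min \<epsilon>0 (p $ N)"
    have \<epsilon>: "\<epsilon> > 0" unfolding \<epsilon>_def using \<epsilon>0 True by simp
    have lineH: "p + t *\<^sub>R axis i 1 \<in> {w. w $ N > 0}" if "\<bar>t\<bar> < \<epsilon>" for i t
    proof -
      have "(p + t *\<^sub>R axis i 1) $ N \<ge> p $ N - \<bar>t\<bar>" by (auto simp: axis_def)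
      then show ?thesis using that unfolding \<epsilon>_def by simp
    qed
    have opn: "open {w::real^'n. w $ N > 0}" by (rule open_halfspace_component_gt_cart)
    have sub: "{w::real^'n. w $ N > 0} \<subseteq> H" unfolding H by auto
    have atH: "at z within H = at z" if "z $ N > 0" for z
      by (rule at_within_open_subset[OF _ opn sub]) (use that in simp)
    have ineq: "ph2 i \<le> D2u p $ i $ i" for i
    proof -
      define g where "g = (\<lambda>t. u (p + t *\<^sub>R axis i 1) - ph i t)"
      define g' where "g' = (\<lambda>t. Du (p + t *\<^sub>R axis i 1) $ i - ph1 i t)"
      have dg: "\<forall>t. \<bar>t\<bar> < \<epsilon> \<longrightarrow> (g has_real_derivative g' t) (at t)"
      proof (intro allI impI)
        fix t assume t: "\<bar>t\<bar> < \<epsilon>"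
        let ?z = "p + t *\<^sub>R axis i 1"
        have zN: "?z $ N > 0" using lineH[OF t] by simp
        have zH: "?z \<in> H" using sub zN by auto
        from du zH have h1: "(u has_derivative (\<lambda>h. Du ?z \<bullet> h)) (at ?z within H)" by blast
        have "(u has_derivative (\<lambda>h. Du ?z \<bullet> h)) (at ?z within UNIV)"
          using h1 atH[OF zN] by simp
        then have "((\<lambda>s. u (p + s *\<^sub>R axis i 1)) has_real_derivative (Du ?z \<bullet> axis i 1)) (at t within UNIV)"
          by (rule line_deriv) simp
        moreover have "Du ?z \<bullet> axis i 1 = Du ?z $ i" by (simp add: inner_axis)
        moreover have "\<bar>t\<bar> < \<epsilon>0" using t unfolding \<epsilon>_def by simp
        ultimately show "(g has_real_derivative g' t) (at t)"
          unfolding g_def g'_def using dph[OF lx] by (auto intro!: DERIV_diff)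
      qed
      have dg': "(g' has_real_derivative (D2u p $ i $ i - ph2 i)) (at 0)"
      proof -
        from d2u pH have h1: "(Du has_derivative (\<lambda>h. D2u p *v h)) (at p within H)" by blast
        have "(Du has_derivative (\<lambda>h. D2u p *v h)) (at p)" using h1 atH[OF True] by simp
        from line_deriv2[OF this, of i] show ?thesis
          unfolding g'_def using dph1 by (auto intro!: DERIV_diff)
      qed
      have mn: "\<forall>t. \<bar>t\<bar> < \<epsilon> \<longrightarrow> g 0 \<le> g t"
      proof (intro allI impI)
        fix t assume t: "\<bar>t\<bar> < \<epsilon>"
        have t0: "\<bar>t\<bar> < \<epsilon>0" using t unfolding \<epsilon>_def by simp
        have "p + t *\<^sub>R axis i 1 \<in> H" using lineH[OF t] sub by auto
        moreover have "dist (p + t *\<^sub>R axis i 1) p < \<epsilon>0" using t0 by (simp add: dist_norm)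
        ultimately have "W p \<le> W (p + t *\<^sub>R axis i 1)" by (rule near)
        moreover have "W p = g 0" using Wline[OF lx[of 0 i]] \<epsilon>0 unfolding g_def by simp
        ultimately show "g 0 \<le> g t" using Wline[OF lx[OF t0]] unfolding g_def by simp
      qed
      from second_order_min[OF \<epsilon> dg dg' mn] show ?thesis by simp
    qed
    have "(\<Sum>i\<in>UNIV. ph2 i) = 0"
      unfolding ph2_def
    proof (rule ph_sum[OF a])
      show "(\<Sum>i\<in>UNIV. (b i)\<^sup>2) = a" unfolding a_def b_def by (rule sum_sq_norm)
      show "\<alpha> = (2 - real CARD('n)) / 2" by (rule \<alpha>_def)
    qed
    then have "(\<Sum>i\<in>UNIV. D2u p $ i $ i) \<ge> 0" using sum_mono[of UNIV ph2 "\<lambda>i. D2u p $ i $ i"] ineq by simp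
    then show False using lap pH by force
  next
    case False
    then have pN: "p $ N = 0" using pH unfolding H by simp
    define g where "g = (\<lambda>t. u (p + t *\<^sub>R axis N 1) - ph N t)"
    have img: "(\<lambda>s. p + s *\<^sub>R axis N 1) ` {0..} \<subseteq> H" unfolding H using pN by (auto simp: axis_def)
    have "((\<lambda>s. u (p + s *\<^sub>R axis N 1)) has_real_derivative (Du p \<bullet> axis N 1)) (at 0 within {0..})"
      by (rule line_deriv[OF _ img]) (use du pH in simp)
    moreover have "(ph N has_real_derivative ph1 N 0) (at 0 within {0..})"
      using dph[OF lx[of 0 N]] \<epsilon>0 by (simp add: has_field_derivative_at_within)
    moreover have "ph1 N 0 = 0" unfolding ph1_def b_def using pN x by simp
    ultimately have dg: "(g has_real_derivative Du p $ N) (at 0 within {0..})"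
      unfolding g_def using DERIV_diff by (fastforce simp: inner_axis)
    have mn: "\<forall>t. 0 \<le> t \<and> t < \<epsilon>0 \<longrightarrow> g 0 \<le> g t"
    proof (intro allI impI)
      fix t assume t: "0 \<le> t \<and> t < \<epsilon>0"
      have t0: "\<bar>t\<bar> < \<epsilon>0" using t by simp
      have "p + t *\<^sub>R axis N 1 \<in> H" using img t by auto
      moreover have "dist (p + t *\<^sub>R axis N 1) p < \<epsilon>0" using t0 by (simp add: dist_norm)
      ultimately have "W p \<le> W (p + t *\<^sub>R axis N 1)" by (rule near)
      moreover have "W p = g 0" using Wline[OF lx[of 0 N]] \<epsilon>0 unfolding g_def by simp
      ultimately show "g 0 \<le> g t" using Wline[OF lx[OF t0]] unfolding g_def by simp
    qed
    have "Du p $ N < 0" using neu pH pN by simp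
    from one_sided_min[OF dg this \<epsilon>0 mn] show False .
  qed
qed

lemma main_analysis:
  fixes u :: "real^'n::finite \<Rightarrow> real" and Du :: "real^'n \<Rightarrow> real^'n"
    and D2u :: "real^'n \<Rightarrow> real^'n^'n" and N :: 'n
  assumes n3: "CARD('n) \<ge> 3"
    and H: "H = {z. z $ N \<ge> 0}"
    and du: "\<forall>z\<in>H. (u has_derivative (\<lambda>h. Du z \<bullet> h)) (at z within H)"
    and d2u: "\<forall>z\<in>H. (Du has_derivative (\<lambda>h. D2u z *v h)) (at z within H)"
    and pos: "\<forall>z\<in>H. u z > 0"
    and lap: "\<forall>z\<in>H. (\<Sum>i\<in>UNIV. D2u z $ i $ i) < 0"
    and neu: "\<forall>z\<in>H. z $ N = 0 \<longrightarrow> Du z $ N < 0"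
    and x: "x $ N = 0"
  shows "\<exists>lam0 > 0. \<forall>lam. 0 < lam \<and> lam < lam0 \<longrightarrow>
              (\<forall>y\<in>H. dist y x \<ge> lam \<longrightarrow> kelvin u x lam y \<le> u y)"
proof -
  define k2 where "k2 = CARD('n) - 2"
  have k2: "k2 \<ge> 1" unfolding k2_def using n3 by simp
  have xH: "x \<in> H" unfolding H using x by simp
  define K where "K = H \<inter> cball x 1"
  have clH: "closed H" unfolding H by (rule closed_halfspace_component_ge_cart)
  have cvH: "convex H" unfolding H convex_def by (auto intro: add_nonneg_nonneg mult_nonneg_nonneg)
  have cK: "compact K" unfolding K_def by (intro closed_Int_compact clH compact_cball)
  have cvK: "convex K" unfolding K_def by (intro convex_Int cvH convex_cball)
  have xK: "x \<in> K" unfolding K_def using xH by simp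
  have KH: "K \<subseteq> H" unfolding K_def by auto
  have contu: "continuous_on H u"
    using du by (metis continuous_on_eq_continuous_within has_derivative_continuous)
  have contDu: "continuous_on H Du"
    using d2u by (metis continuous_on_eq_continuous_within has_derivative_continuous)
  obtain xm where xm: "xm \<in> K" "\<forall>z\<in>K. u xm \<le> u z"
    using continuous_attains_inf[OF cK _ continuous_on_subset[OF contu KH]] xK by blast
  define m where "m = u xm"
  have m: "m > 0" unfolding m_def using pos xm KH by auto
  have mK: "\<forall>z\<in>K. m \<le> u z" unfolding m_def using xm by simp
  obtain xM where xM: "xM \<in> K" "\<forall>z\<in>K. u z \<le> u xM"
    using continuous_attains_sup[OF cK _ continuous_on_subset[OF contu KH]] xK by blast
  define Mx where "Mx = u xM"
  have MK: "\<forall>z\<in>K. u z \<le> Mx" unfolding Mx_def using xM by simp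
  have mM: "m \<le> Mx" using mK MK xK by force
  have Mx: "Mx > 0" using m mM by simp
  have "bounded (Du ` K)"
    by (intro compact_imp_bounded compact_continuous_image continuous_on_subset[OF contDu KH] cK)
  then obtain B where B: "B > 0" "\<forall>z\<in>K. norm (Du z) \<le> B" unfolding bounded_pos by auto
  have lip: "\<bar>u z1 - u z2\<bar> \<le> B * norm (z1 - z2)" if "z1 \<in> K" "z2 \<in> K" for z1 z2
  proof -
    have "norm (u z1 - u z2) \<le> B * norm (z1 - z2)"
    proof (rule differentiable_bound[OF cvK _ _ that])
      fix z assume z: "z \<in> K"
      show "(u has_derivative (\<lambda>h. Du z \<bullet> h)) (at z within K)"
        using du z KH by (meson has_derivative_subset subsetD)
      show "onorm (\<lambda>h. Du z \<bullet> h) \<le> B"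
      proof (rule onorm_le)
        fix h
        have "norm (Du z \<bullet> h) \<le> norm (Du z) * norm h" using Cauchy_Schwarz_ineq2 by simp
        also have "\<dots> \<le> B * norm h" using B z by (simp add: mult_right_mono)
        finally show "norm (Du z \<bullet> h) \<le> B * norm h" .
      qed
    qed
    then show ?thesis by simp
  qed
  define r0 where "r0 = min 1 (m / (2 * B))"
  have r0: "r0 > 0" "r0 \<le> 1" "2 * B * r0 \<le> m" unfolding r0_def using m B
    by (auto simp: min_def field_simps)
  have sph: "\<forall>z\<in>H. dist z x = r0 \<longrightarrow> u z \<ge> m"
  proof (intro ballI impI)
    fix z assume "z \<in> H" "dist z x = r0"
    then have "z \<in> K" unfolding K_def using r0 by (simp add: dist_commute)
    then show "u z \<ge> m" using mK by simp
  qed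
  have LB: "\<forall>y\<in>H. dist y x \<ge> r0 \<longrightarrow> u y \<ge> m * r0 ^ k2 / (dist y x) ^ k2"
    using lower_bound[OF n3 H du d2u pos lap neu x r0(1) m sph] unfolding k2_def .
  define lam0 where "lam0 = r0 * (m / Mx)"
  have q: "0 < m / Mx" "m / Mx \<le> 1" using m Mx mM by auto
  have lam0: "lam0 > 0" "lam0 \<le> r0"
  proof -
    show "lam0 > 0" unfolding lam0_def using r0 q by (intro mult_pos_pos) auto
    have "r0 * (m / Mx) \<le> r0 * 1" using r0 q by (intro mult_left_mono) auto
    then show "lam0 \<le> r0" unfolding lam0_def by simp
  qed
  show ?thesis
  proof (intro exI[of _ lam0] conjI allI impI ballI)
    show "lam0 > 0" by (rule lam0)
    fix lam y assume lam: "0 < lam \<and> lam < lam0" and yH: "y \<in> H" and ly: "dist y x \<ge> lam"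
    define r where "r = dist y x"
    have r: "r > 0" "lam \<le> r" using lam ly unfolding r_def by auto
    have nr: "norm (y - x) = r" unfolding r_def by (simp add: dist_norm)
    define z where "z = x + (lam\<^sup>2 / r\<^sup>2) *\<^sub>R (y - x)"
    have kel: "kelvin u x lam y = (lam / r) ^ k2 * u z"
      unfolding kelvin_def z_def k2_def nr ..
    have zH: "z \<in> H"
    proof -
      have "z $ N = (lam\<^sup>2 / r\<^sup>2) * y $ N" unfolding z_def using x by simp
      moreover have "y $ N \<ge> 0" using yH unfolding H by simp
      ultimately show ?thesis unfolding H by simp
    qed
    have dz: "dist z x = lam\<^sup>2 / r"
    proof -
      have "dist z x = norm ((lam\<^sup>2 / r\<^sup>2) *\<^sub>R (y - x))" unfolding z_def by (simp add: dist_norm)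
      also have "\<dots> = lam\<^sup>2 / r\<^sup>2 * r" unfolding norm_scaleR nr by simp
      also have "\<dots> = lam\<^sup>2 / r" using r by (simp add: power2_eq_square)
      finally show ?thesis .
    qed
    have "lam\<^sup>2 / r \<le> lam" using r lam by (simp add: power2_eq_square divide_le_eq mult_left_mono)
    then have dzl: "dist z x \<le> lam" unfolding dz .
    have zK: "z \<in> K" unfolding K_def using zH dzl lam lam0 r0 by (simp add: dist_commute)
    have uz: "u z > 0" "m \<le> u z" "u z \<le> Mx" using pos zH mK MK zK by auto
    define \<rho> where "\<rho> = lam / r"
    have \<rho>: "0 < \<rho>" "\<rho> \<le> 1" unfolding \<rho>_def using r lam by auto
    have kel2: "kelvin u x lam y = \<rho> ^ k2 * u z" unfolding kel \<rho>_def ..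
    show "kelvin u x lam y \<le> u y"
    proof (cases "r \<le> r0")
      case True
      have yK: "y \<in> K" unfolding K_def using yH True r0 unfolding r_def by (simp add: dist_commute)
      have zy: "norm (z - y) = (1 - \<rho>\<^sup>2) * r"
      proof -
        have "z - y = - ((1 - \<rho>\<^sup>2) *\<^sub>R (y - x))" unfolding z_def \<rho>_def using r
          by (simp add: algebra_simps power_divide)
        then have "norm (z - y) = \<bar>1 - \<rho>\<^sup>2\<bar> * r" by (simp add: nr)
        moreover have "\<rho>\<^sup>2 \<le> 1" using \<rho> by (simp add: power_le_one)
        ultimately show ?thesis by simp
      qed
      have uy: "u y \<ge> u z - B * ((1 - \<rho>\<^sup>2) * r)" using lip[OF zK yK] zy by simp
      have "\<rho> ^ k2 \<le> \<rho> ^ 1" using \<rho> k2 by (intro power_decreasing) auto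
      then have k1: "kelvin u x lam y \<le> \<rho> * u z" unfolding kel2 using uz by (simp add: mult_right_mono)
      have "B * ((1 - \<rho>\<^sup>2) * r) = (1 - \<rho>) * ((1 + \<rho>) * (B * r))" by (simp add: algebra_simps power2_eq_square)
      also have "\<dots> \<le> (1 - \<rho>) * (2 * (B * r))"
        using \<rho> B r by (intro mult_left_mono mult_right_mono) auto
      also have "\<dots> \<le> (1 - \<rho>) * m"
      proof -
        have "2 * (B * r) \<le> 2 * B * r0" using True B by simp
        then show ?thesis using r0 \<rho> by (intro mult_left_mono) auto
      qed
      also have "\<dots> \<le> (1 - \<rho>) * u z" using uz \<rho> by (intro mult_left_mono) auto
      finally have "B * ((1 - \<rho>\<^sup>2) * r) \<le> (1 - \<rho>) * u z" .
      then show ?thesis using k1 uy by (simp add: algebra_simps)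
    next
      case False
      then have "u y \<ge> m * r0 ^ k2 / r ^ k2" using LB yH unfolding r_def by simp
      moreover have "kelvin u x lam y \<le> m * r0 ^ k2 / r ^ k2"
      proof -
        have "kelvin u x lam y = lam ^ k2 * u z / r ^ k2" unfolding kel by (simp add: power_divide)
        also have "\<dots> \<le> lam ^ k2 * Mx / r ^ k2" using uz r lam by (intro divide_right_mono mult_left_mono) auto
        also have "lam ^ k2 * Mx \<le> m * r0 ^ k2"
        proof -
          have "lam ^ k2 \<le> lam0 ^ k2" using lam by (intro power_mono) auto
          also have "\<dots> = r0 ^ k2 * (m / Mx) ^ k2" unfolding lam0_def by (rule power_mult_distrib)
          also have "\<dots> \<le> r0 ^ k2 * (m / Mx) ^ 1" using q k2 r0 by (intro mult_left_mono power_decreasing) auto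
          finally have "lam ^ k2 * Mx \<le> r0 ^ k2 * (m / Mx) * Mx" using Mx by (intro mult_right_mono) auto
          then show ?thesis using Mx by (simp add: mult.commute)
        qed
        then have "lam ^ k2 * Mx / r ^ k2 \<le> m * r0 ^ k2 / r ^ k2" using r by (intro divide_right_mono) auto
        finally show ?thesis .
      qed
      ultimately show ?thesis by simp
    qed
  qed
qed

lemma trace_A:
  fixes u :: "real^'n::finite \<Rightarrow> real"
  shows "(\<Sum>i\<in>UNIV. A_u u Du D2u z $ i $ i) = - (2 / (real CARD('n) - 2)) * u z powr (- (real CARD('n) + 2) / (real CARD('n) - 2)) * (\<Sum>i\<in>UNIV. D2u z $ i $ i)"
proof -
  define nn where "nn = real CARD('n)"
  define U1 where "U1 = u z powr (- (nn + 2) / (nn - 2))"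
  define U2 where "U2 = u z powr (- 2 * nn / (nn - 2))"
  define c3 where "c3 = (2 / (nn - 2)\<^sup>2) * U2"
  have e: "A_u u Du D2u z $ i $ i = - (2 / (nn - 2)) * U1 * D2u z $ i $ i + (nn * c3) * (Du z $ i)\<^sup>2 - c3 * (norm (Du z))\<^sup>2" for i
    unfolding A_u_def Let_def nn_def U1_def U2_def c3_def by (simp add: power2_eq_square)
  have "(\<Sum>i\<in>UNIV. A_u u Du D2u z $ i $ i) = - (2 / (nn - 2)) * U1 * (\<Sum>i\<in>UNIV. D2u z $ i $ i) + (nn * c3) * (\<Sum>i\<in>UNIV. (Du z $ i)\<^sup>2) - nn * (c3 * (norm (Du z))\<^sup>2)"
    unfolding e by (simp add: sum.distrib sum_subtractf sum_distrib_left sum_negf nn_def)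
  also have "\<dots> = - (2 / (nn - 2)) * U1 * (\<Sum>i\<in>UNIV. D2u z $ i $ i)"
    unfolding sum_sq_norm by (simp add: algebra_simps)
  finally show ?thesis unfolding nn_def U1_def .
qed

lemma neg_mult_pos: "(c::real) < 0 \<Longrightarrow> c * s > 0 \<Longrightarrow> s < 0"
proof (rule ccontr)
  assume c: "c < 0" and cs: "c * s > 0" and "\<not> s < 0"
  then have "s \<ge> 0" by simp
  then have "c * s \<le> 0" using c by (intro mult_nonpos_nonneg) auto
  then show False using cs by simp
qed

theorem lemma3p3:
  fixes u :: "real^'n \<Rightarrow> real"
    and Du :: "real^'n \<Rightarrow> real^'n"
    and D2u :: "real^'n \<Rightarrow> real^'n^'n"
    and N :: 'n and k :: nat and c0 :: real
  assumes n3: "CARD('n) \<ge> 3"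
    and k: "1 \<le> k" "k \<le> CARD('n)"
    and c0: "c0 > 0"
    and C2: "C2_on (half_space N) u Du D2u"
    and pos: "\<forall>x\<in>half_space N. u x > 0"
    and eq: "\<forall>x\<in>half_space N. \<exists>lam. eig_on UNIV (\<lambda>i j. A_u u Du D2u x $ i $ j) lam
                 \<and> sigma_on UNIV k lam = 2 ^ k * real (CARD('n) choose k)
                 \<and> Gamma_plus UNIV k lam"
    and bdry: "\<forall>x\<in>bdry_half_space N. \<exists>lamT.
                 eig_on (UNIV - {N}) (\<lambda>i j. A_u u Du D2u x $ i $ j) lamT
                 \<and> B_k k (UNIV - {N}) lamT (h_u N u Du x) = c0"
  shows "\<forall>x\<in>bdry_half_space N.
           (\<exists>lam0 > 0. \<forall>lam. 0 < lam \<and> lam < lam0 \<longrightarrow>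
              (\<forall>y\<in>half_space N. dist y x \<ge> lam \<longrightarrow> kelvin u x lam y \<le> u y))
         \<and> lambda_bar N u x > 0"
proof -
  define H where "H = half_space N"
  have H: "H = {z. z $ N \<ge> 0}" unfolding H_def half_space_def ..
  have du: "\<forall>z\<in>H. (u has_derivative (\<lambda>h. Du z \<bullet> h)) (at z within H)"
    and d2u: "\<forall>z\<in>H. (Du has_derivative (\<lambda>h. D2u z *v h)) (at z within H)"
    using C2 unfolding C2_on_def H_def by auto
  have posH: "\<forall>z\<in>H. u z > 0" using pos unfolding H_def .
  have nn: "real CARD('n) - 2 > 0" using n3 by simp
  have lap: "\<forall>z\<in>H. (\<Sum>i\<in>UNIV. D2u z $ i $ i) < 0"
  proof
    fix z assume z: "z \<in> H"
    obtain lam where eig: "eig_on UNIV (\<lambda>i j. A_u u Du D2u z $ i $ j) lam" and gam: "Gamma_plus UNIV k lam"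
      using eq z unfolding H_def by blast
    have "sigma_on UNIV 1 lam > 0" using gam k unfolding Gamma_plus_def by auto
    then have tr: "(\<Sum>i\<in>UNIV. A_u u Du D2u z $ i $ i) > 0" using trace_sigma1[OF eig] by simp
    have uz: "u z > 0" using posH z by blast
    have up: "u z powr (- (real CARD('n) + 2) / (real CARD('n) - 2)) > 0" using uz by simp
    have "2 / (real CARD('n) - 2) * u z powr (- (real CARD('n) + 2) / (real CARD('n) - 2)) > 0"
      using up nn by (intro mult_pos_pos) auto
    then have cneg: "- (2 / (real CARD('n) - 2)) * u z powr (- (real CARD('n) + 2) / (real CARD('n) - 2)) < 0"
      by simp
    show "(\<Sum>i\<in>UNIV. D2u z $ i $ i) < 0"
      by (rule neg_mult_pos[OF cneg]) (use tr in \<open>simp only: trace_A\<close>)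
  qed
  have neu: "\<forall>z\<in>H. z $ N = 0 \<longrightarrow> Du z $ N < 0"
  proof (intro ballI impI)
    fix z assume z: "z \<in> H" "z $ N = 0"
    then have zb: "z \<in> bdry_half_space N" unfolding bdry_half_space_def by simp
    obtain lam where eig: "eig_on UNIV (\<lambda>i j. A_u u Du D2u z $ i $ j) lam" and gam: "Gamma_plus UNIV k lam"
      using eq z unfolding H_def by blast
    obtain lamT where eigT: "eig_on (UNIV - {N}) (\<lambda>i j. A_u u Du D2u z $ i $ j) lamT"
      and Bk: "B_k k (UNIV - {N}) lamT (h_u N u Du z) = c0"
      using bdry zb by blast
    have "h_u N u Du z > 0" using h_pos[OF k(1) eig gam eigT] Bk c0 by simp
    moreover have "h_u N u Du z = - (2 / (real CARD('n) - 2)) * u z powr (- real CARD('n) / (real CARD('n) - 2)) * Du z $ N"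
      unfolding h_u_def Let_def ..
    moreover have "- (2 / (real CARD('n) - 2)) * u z powr (- real CARD('n) / (real CARD('n) - 2)) < 0"
    proof -
      have uz: "u z > 0" using posH z(1) by blast
      have up: "u z powr (- real CARD('n) / (real CARD('n) - 2)) > 0" using uz by simp
      have "2 / (real CARD('n) - 2) * u z powr (- real CARD('n) / (real CARD('n) - 2)) > 0"
        using up nn by (intro mult_pos_pos) auto
      then show ?thesis by simp
    qed
    ultimately show "Du z $ N < 0" using neg_mult_pos by metis
  qed
  show ?thesis
  proof
    fix x assume xb: "x \<in> bdry_half_space N"
    then have x: "x $ N = 0" unfolding bdry_half_space_def by simp
    obtain lam0 where lam0: "lam0 > 0"
      and P: "\<forall>lam. 0 < lam \<and> lam < lam0 \<longrightarrow> (\<forall>y\<in>H. dist y x \<ge> lam \<longrightarrow> kelvin u x lam y \<le> u y)"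
      using main_analysis[OF n3 H du d2u posH lap neu x] by blast
    have "lam0 \<in> {mu. mu > 0 \<and> (\<forall>lam. 0 < lam \<and> lam < mu \<longrightarrow>
         (\<forall>y\<in>half_space N. dist y x \<ge> lam \<longrightarrow> kelvin u x lam y \<le> u y))}"
      using lam0 P unfolding H_def by simp
    then have "ereal lam0 \<le> lambda_bar N u x" unfolding lambda_bar_def by (intro Sup_upper) auto
    then have "lambda_bar N u x > 0" using lam0 by (metis ereal_less(2) order_less_le_trans)
    then show "(\<exists>lam0 > 0. \<forall>lam. 0 < lam \<and> lam < lam0 \<longrightarrow>
              (\<forall>y\<in>half_space N. dist y x \<ge> lam \<longrightarrow> kelvin u x lam y \<le> u y))
         \<and> lambda_bar N u x > 0"
      using lam0 P unfolding H_def by blast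
  qed
qed

end
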